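(* Let $\alpha\in(0,1)$ and $n\ge 1$. Consider the cooling process $(w_t)_{t\ge0}$ on $\mathcal{W}_{2n}$. If $w_t\in\mathcal{W}_{2n}$ satisfies $E(w_t)>0$, then $$\mathbb{E}\big(\phi_\alpha(w_{t+1})-\phi_\alpha(w_t)\,\big|\,w_t\big)\le -\frac{\alpha(1-\alpha)}{2}\,n^{\alpha-2}.$$
   Context: A configuration of length $m$ is a word $w=w_1\cdots w_m$ over $\{1,2\}$ with $|w|_1=|w|_2$; $\mathcal{W}_m$ is the set of such words. A flip at position $i$ exchanges $w_i$ and $w_{i+1}$ when $w_i\ne w_{i+1}$. A mismatch at position $i$ means $w_i=w_{i+1}$; $E(w)$ is the number of mismatches. The cooling process is the Markov chain with $w_{t+1}=w_t$ if $E(w_t)=0$, and otherwise $w_{t+1}$ is obtained by performing a flip chosen uniformly at random among the flips on $w_t$ that do not increase $E$. Dyck factors: write $w=p\cdot v\cdot s$ with $v=v_1\cdots v_k$ a nonempty factor (occurring at a given position). $v$ is a positive Dyck factor of height $|p|_1-|p|_2$ if $|v|_1=|v|_2$, $|v_1\cdots v_i|_1\ge|v_1\cdots v_i|_2$ for all $1\le i\le k$, and $|p|_1-|p|_2\ge0$. A negative Dyck factor is defined by exchanging the letters $1$ and $2$ in these three conditions. A Dyck factor is maximal if no Dyck factor with the same height contains it. For $\alpha\in(0,1)$, $\phi_\alpha(w)=\sum_{v\in\mathrm{DF}(w)}(1+|v|_1)^\alpha$, where $\mathrm{DF}(w)$ is the set of (occurrences of) maximal Dyck factors of $w$. *)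

theory Defs
  imports "HOL-Probability.Probability"
begin

text \<open>Words over the alphabet {1,2} are lists of naturals; positions are 0-indexed.\<close>

definition configs :: "nat \<Rightarrow> nat list set" where
  "configs m = {w. length w = m \<and> set w \<subseteq> {1,2} \<and> count_list w 1 = count_list w 2}"

definition mismatches :: "nat list \<Rightarrow> nat" where
  "mismatches w = card {i. Suc i < length w \<and> w ! i = w ! Suc i}"

definition flip :: "nat \<Rightarrow> nat list \<Rightarrow> nat list" where
  "flip i w = w[i := w ! Suc i, Suc i := w ! i]"

definition allowed_flips :: "nat list \<Rightarrow> nat set" where
  "allowed_flips w = {i. Suc i < length w \<and> w ! i \<noteq> w ! Suc i
                         \<and> mismatches (flip i w) \<le> mismatches w}"

definition cool_step :: "nat list \<Rightarrow> nat list pmf" where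
  "cool_step w = (if mismatches w = 0 then return_pmf w
                  else map_pmf (\<lambda>i. flip i w) (pmf_of_set (allowed_flips w)))"

text \<open>Occurrence (j,k): factor v = w_(j+1)...w_(j+k) with prefix p = take j w.
  Positive Dyck factor of height |p|_1 - |p|_2; negative Dyck factor (letters exchanged)
  of height |p|_2 - |p|_1.\<close>
definition pos_dyck :: "nat list \<Rightarrow> nat \<Rightarrow> nat \<Rightarrow> bool" where
  "pos_dyck w j k \<longleftrightarrow> 0 < k \<and> j + k \<le> length w \<and>
     (let p = take j w; v = take k (drop j w) in
        count_list v 1 = count_list v 2 \<and>
        (\<forall>i\<in>{1..k}. count_list (take i v) 1 \<ge> count_list (take i v) 2) \<and>
        count_list p 1 \<ge> count_list p 2)"

definition neg_dyck :: "nat list \<Rightarrow> nat \<Rightarrow> nat \<Rightarrow> bool" where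
  "neg_dyck w j k \<longleftrightarrow> 0 < k \<and> j + k \<le> length w \<and>
     (let p = take j w; v = take k (drop j w) in
        count_list v 2 = count_list v 1 \<and>
        (\<forall>i\<in>{1..k}. count_list (take i v) 2 \<ge> count_list (take i v) 1) \<and>
        count_list p 2 \<ge> count_list p 1)"

definition dyck_factor :: "nat list \<Rightarrow> nat \<Rightarrow> nat \<Rightarrow> int \<Rightarrow> bool" where
  "dyck_factor w j k h \<longleftrightarrow>
     (pos_dyck w j k \<and> h = int (count_list (take j w) 1) - int (count_list (take j w) 2)) \<or>
     (neg_dyck w j k \<and> h = int (count_list (take j w) 2) - int (count_list (take j w) 1))"

definition max_dyck_factors :: "nat list \<Rightarrow> (nat \<times> nat) set" where
  "max_dyck_factors w = {(j, k). \<exists>h. dyck_factor w j k h \<and>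
      \<not> (\<exists>j' k'. (j', k') \<noteq> (j, k) \<and> j' \<le> j \<and> j + k \<le> j' + k' \<and> dyck_factor w j' k' h)}"

definition phi :: "real \<Rightarrow> nat list \<Rightarrow> real" where
  "phi \<alpha> w = (\<Sum>(j, k)\<in>max_dyck_factors w. (1 + real (count_list (take k (drop j w)) 1)) powr \<alpha>)"

end

theory Submission
  imports Defs
begin

lemma conv_pow:
  fixes b u t :: real
  assumes b: "b \<le> 0" and u: "0 \<le> t" "t < u"
  shows "2 * u powr b \<le> (u + t) powr b + (u - t) powr b"
proof -
  let ?f = "\<lambda>s. (u + s) powr b + (u - s) powr b"
  have "?f 0 \<le> ?f t"
  proof (rule DERIV_nonneg_imp_nondecreasing[OF u(1)])
    fix s assume s: "0 \<le> s" "s \<le> t"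
    have d: "(?f has_real_derivative (b * (u + s) powr (b - 1) - b * (u - s) powr (b - 1))) (at s)"
      using s u by (auto intro!: derivative_eq_intros simp: algebra_simps)
    have "(u + s) powr (b - 1) \<le> (u - s) powr (b - 1)"
      by (rule powr_mono2') (use s u b in auto)
    then have "0 \<le> b * (u + s) powr (b - 1) - b * (u - s) powr (b - 1)"
      using b by (simp add: mult_left_mono_neg)
    then show "\<exists>y. (?f has_real_derivative y) (at s) \<and> 0 \<le> y" using d by blast
  qed
  then show ?thesis by simp
qed

lemma secdiff_real:
  fixes a u :: real
  assumes a: "0 < a" "a < 1" and u: "2 \<le> u"
  shows "(u + 1) powr a - 2 * u powr a + (u - 1) powr a \<le> - a * (1 - a) * u powr (a - 2)"
proof -
  define K where "K = a * (1 - a) * u powr (a - 2)"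
  define d1 where "d1 = (\<lambda>t. a * (u + t) powr (a - 1) - a * (u - t) powr (a - 1) + 2 * K * t)"
  define psi where "psi = (\<lambda>t. (u + t) powr a + (u - t) powr a - 2 * u powr a + K * t\<^sup>2)"
  have d1neg: "d1 t \<le> 0" if t: "0 \<le> t" "t \<le> 1" for t
  proof -
    have "d1 t \<le> d1 0"
    proof (rule DERIV_nonpos_imp_nonincreasing[OF t(1)])
      fix s assume s: "0 \<le> s" "s \<le> t"
      have der: "(d1 has_real_derivative
          (a * ((a - 1) * (u + s) powr (a - 1 - 1)) + a * ((a - 1) * (u - s) powr (a - 1 - 1)) + 2 * K)) (at s)"
        unfolding d1_def using s t u by (auto intro!: derivative_eq_intros simp: algebra_simps)
      have c: "2 * u powr (a - 2) \<le> (u + s) powr (a - 2) + (u - s) powr (a - 2)"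
        by (rule conv_pow) (use s t u a in auto)
      have e: "a - 1 - 1 = a - 2" by simp
      have "a * ((a - 1) * (u + s) powr (a - 1 - 1)) + a * ((a - 1) * (u - s) powr (a - 1 - 1)) + 2 * K
          = a * (1 - a) * (2 * u powr (a - 2) - ((u + s) powr (a - 2) + (u - s) powr (a - 2)))"
        unfolding e K_def by (simp add: algebra_simps)
      also have "\<dots> \<le> 0"
        using c a by (intro mult_nonneg_nonpos) auto
      finally show "\<exists>y. (d1 has_real_derivative y) (at s) \<and> y \<le> 0" using der by blast
    qed
    then show ?thesis by (simp add: d1_def)
  qed
  have "psi 1 \<le> psi 0"
  proof (rule DERIV_nonpos_imp_nonincreasing[of 0 1])
    show "(0::real) \<le> 1" by simp
  next
    fix t :: real assume t: "0 \<le> t" "t \<le> 1"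
    have "(psi has_real_derivative d1 t) (at t)"
      unfolding psi_def d1_def using t u by (auto intro!: derivative_eq_intros simp: algebra_simps)
    then show "\<exists>y. (psi has_real_derivative y) (at t) \<and> y \<le> 0" using d1neg[OF t] by blast
  qed
  then show ?thesis unfolding psi_def K_def by simp
qed

definition fpow :: "real \<Rightarrow> nat \<Rightarrow> real" where
  "fpow a L = (1 + real L) powr a"

definition gpow :: "real \<Rightarrow> nat \<Rightarrow> real" where
  "gpow a L = (if L = 0 then 0 else fpow a L)"

definition dd :: "real \<Rightarrow> nat \<Rightarrow> real" where
  "dd a m = fpow a (Suc m) - fpow a m"

definition cc :: "real \<Rightarrow> nat \<Rightarrow> real" where
  "cc a n = a * (1 - a) / 2 * real n powr (a - 2)"

lemma fpow0: "fpow a 0 = 1" by (simp add: fpow_def)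

lemma fpow_pos: "0 < fpow a L" by (simp add: fpow_def)

lemma gpow_le_fpow: "gpow a L \<le> fpow a L"
  using fpow_pos[of a L] fpow_pos[of a 0] by (simp add: gpow_def)

lemma gpow_le: "0 \<le> a \<Longrightarrow> gpow a m - fpow a (Suc m) \<le> - dd a m"
  by (cases "m = 0") (auto simp: gpow_def dd_def fpow_def)

lemma dd_nonneg: "0 \<le> a \<Longrightarrow> 0 \<le> dd a m"
  unfolding dd_def fpow_def by (intro diff_ge_0_iff_ge[THEN iffD2] powr_mono2) auto

lemma secdiff:
  assumes a: "0 < a" "a < 1" and x: "1 \<le> x"
  shows "dd a x - dd a (x - 1) \<le> - a * (1 - a) * (real x + 1) powr (a - 2)"
proof -
  have "(real x + 1 + 1) powr a - 2 * (real x + 1) powr a + (real x + 1 - 1) powr a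
      \<le> - a * (1 - a) * (real x + 1) powr (a - 2)"
    by (rule secdiff_real) (use a x in auto)
  moreover have "real (x - 1) = real x - 1" using x by auto
  ultimately show ?thesis using x unfolding dd_def fpow_def
    by (simp add: algebra_simps)
qed

lemma dd_step: "0 < a \<Longrightarrow> a < 1 \<Longrightarrow> dd a (Suc m) \<le> dd a m"
proof -
  assume a: "0 < a" "a < 1"
  have "dd a (Suc m) - dd a (Suc m - 1) \<le> - a * (1 - a) * (real (Suc m) + 1) powr (a - 2)"
    by (rule secdiff) (use a in auto)
  moreover have "0 \<le> a * (1 - a) * (real (Suc m) + 1) powr (a - 2)" using a by auto
  ultimately show ?thesis by simp
qed

lemma dd_antimono:
  assumes a: "0 < a" "a < 1" and mm: "m \<le> m'" shows "dd a m' \<le> dd a m"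
  using mm
proof (induction m' rule: dec_induct)
  case (step k) then show ?case using dd_step[of a k] a by linarith
qed simp

lemma mvt_lower:
  fixes a x y :: real
  assumes a: "0 < a" "a < 1" and xy: "0 < y" "y \<le> x"
  shows "a * x powr (a - 1) * (x - y) \<le> x powr a - y powr a"
proof -
  let ?f = "\<lambda>s. x powr a - s powr a - a * x powr (a - 1) * (x - s)"
  have "?f x \<le> ?f y"
  proof (rule DERIV_nonpos_imp_nonincreasing[OF xy(2)])
    fix s assume s: "y \<le> s" "s \<le> x"
    have der: "(?f has_real_derivative (- (a * s powr (a - 1)) + a * x powr (a - 1))) (at s)"
      using s xy by (auto intro!: derivative_eq_intros simp: algebra_simps)
    have "x powr (a - 1) \<le> s powr (a - 1)" by (rule powr_mono2') (use s xy a in auto)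
    then have "- (a * s powr (a - 1)) + a * x powr (a - 1) \<le> 0" using a
      by (simp add: mult_left_mono)
    then show "\<exists>z. (?f has_real_derivative z) (at s) \<and> z \<le> 0" using der by blast
  qed
  then show ?thesis by simp
qed

lemma dd_lower:
  assumes a: "0 < a" "a < 1" and mn: "m + 1 \<le> n"
  shows "cc a n \<le> dd a m"
proof -
  have n1: "1 \<le> real n" using mn by auto
  have "a * (real m + 2) powr (a - 1) * ((real m + 2) - (real m + 1)) \<le> (real m + 2) powr a - (real m + 1) powr a"
    by (rule mvt_lower) (use a in auto)
  then have A: "a * (real m + 2) powr (a - 1) \<le> dd a m" unfolding dd_def fpow_def
    by (simp add: add.commute)
  have "(2 * real n) powr (a - 1) \<le> (real m + 2) powr (a - 1)"
    by (rule powr_mono2') (use a mn in auto)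
  moreover have "(2 * real n) powr (a - 1) = 2 powr (a - 1) * real n powr (a - 1)"
    by (simp add: powr_mult)
  moreover have "2 powr (-1) \<le> (2::real) powr (a - 1)" by (rule powr_mono) (use a in auto)
  moreover have "real n powr (a - 2) \<le> real n powr (a - 1)" by (rule powr_mono) (use n1 in auto)
  ultimately have "1 / 2 * real n powr (a - 2) \<le> (real m + 2) powr (a - 1)"
  proof -
    assume h: "(2 * real n) powr (a - 1) \<le> (real m + 2) powr (a - 1)"
      "(2 * real n) powr (a - 1) = 2 powr (a - 1) * real n powr (a - 1)"
      "2 powr (-1) \<le> (2::real) powr (a - 1)" "real n powr (a - 2) \<le> real n powr (a - 1)"
    have "1 / 2 * real n powr (a - 2) \<le> 2 powr (-1) * real n powr (a - 1)"
      using h(4) by (simp add: powr_minus)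
    also have "\<dots> \<le> 2 powr (a - 1) * real n powr (a - 1)"
      using h(3) by (intro mult_right_mono) auto
    finally show ?thesis using h(1,2) by linarith
  qed
  then have "a * (1 / 2 * real n powr (a - 2)) \<le> a * (real m + 2) powr (a - 1)"
    using a by (intro mult_left_mono) auto
  moreover have "cc a n \<le> a * (1 / 2 * real n powr (a - 2))"
  proof -
    have "a * (1 - a) / 2 * real n powr (a - 2) \<le> a / 2 * real n powr (a - 2)"
      using a by (intro mult_right_mono) auto
    then show ?thesis unfolding cc_def by simp
  qed
  ultimately show ?thesis using A by linarith
qed

lemma cc_le_fpow1: "0 < a \<Longrightarrow> a < 1 \<Longrightarrow> 1 \<le> n \<Longrightarrow> cc a n \<le> fpow a 1"
proof -
  assume a: "0 < a" "a < 1" and n: "1 \<le> n"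
  have "real n powr (a - 2) \<le> real n powr 0" by (rule powr_mono) (use a n in auto)
  then have "real n powr (a - 2) \<le> 1" using n by simp
  moreover have "a * (1 - a) \<le> 1" using a by (intro mult_le_one) auto
  ultimately have "a * (1 - a) * real n powr (a - 2) \<le> 1 * 1"
    using a by (intro mult_mono) auto
  then have "cc a n \<le> 1 / 2" unfolding cc_def by simp
  moreover have "1 \<le> fpow a 1" unfolding fpow_def using a by (simp add: ge_one_powr_ge_zero)
  ultimately show ?thesis by simp
qed

lemma two_three:
  assumes a: "0 < a" "a < 1" and n: "2 \<le> n"
  shows "2 * fpow a 2 - 3 * fpow a 1 + 3 * cc a n \<le> 0"
proof -
  have s: "dd a 1 - dd a (1 - 1) \<le> - a * (1 - a) * (real 1 + 1) powr (a - 2)"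
    by (rule secdiff) (use a in auto)
  have "real n powr (a - 2) \<le> 2 powr (a - 2)" by (rule powr_mono2') (use a n in auto)
  then have "a * (1 - a) * real n powr (a - 2) \<le> a * (1 - a) * 2 powr (a - 2)"
    using a by (intro mult_left_mono) auto
  moreover have "fpow a 1 \<le> 2"
  proof -
    have "(2::real) powr a \<le> 2 powr 1" by (rule powr_mono) (use a in auto)
    then show ?thesis unfolding fpow_def by simp
  qed
  moreover have "2 * fpow a 2 - 3 * fpow a 1 = 2 * (dd a 1 - dd a 0) + fpow a 1 - 2"
    unfolding dd_def by (simp add: fpow0 numeral_2_eq_2)
  moreover have "0 \<le> a * (1 - a) * real n powr (a - 2)" using a by auto
  ultimately show ?thesis using s unfolding cc_def by (simp add: field_simps)
qed

lemma mm_bound: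
  assumes a: "0 < a" "a < 1" and xy: "1 \<le> x" "1 \<le> y"
  shows "fpow a (x + y + 1) - fpow a x - fpow a y \<le> 2 * fpow a 2 - 3 * fpow a 1"
proof -
  have mono: "fpow a (x + y + 1) - fpow a x - fpow a y \<le> fpow a (1 + y + 1) - fpow a 1 - fpow a y" if "1 \<le> x" for x
    using that
  proof (induction x rule: dec_induct)
    case (step k)
    have "dd a (k + y + 1) \<le> dd a k" by (rule dd_antimono) (use a in auto)
    then show ?case using step unfolding dd_def by simp
  qed simp
  have mono2: "fpow a (1 + y + 1) - fpow a 1 - fpow a y \<le> fpow a 3 - 2 * fpow a 1" if "1 \<le> y" for y
    using that
  proof (induction y rule: dec_induct)
    case base then show ?case by (simp add: numeral_3_eq_3)
  next
    case (step k)
    have "dd a (k + 2) \<le> dd a k" by (rule dd_antimono) (use a in auto)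
    then show ?case using step unfolding dd_def by (simp add: numeral_2_eq_2)
  qed
  have "dd a 2 \<le> dd a 1" by (rule dd_antimono) (use a in auto)
  then have "fpow a 3 - 2 * fpow a 1 \<le> 2 * fpow a 2 - 3 * fpow a 1"
    unfolding dd_def by (simp add: numeral_3_eq_3 numeral_2_eq_2)
  then show ?thesis using mono[OF xy(1)] mono2[OF xy(2)] by linarith
qed


type_synonym path = "nat \<Rightarrow> int"

definition stp :: "path \<Rightarrow> nat \<Rightarrow> bool" where
  "stp P N \<longleftrightarrow> (\<forall>t<N. P (Suc t) = P t + 1 \<or> P (Suc t) = P t - 1)"

definition lbeg :: "path \<Rightarrow> nat \<Rightarrow> nat" where
  "lbeg P j = (if \<exists>t<j. P t < P j then Suc (GREATEST t. t < j \<and> P t < P j) else 0)"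

lemma lbeg_props:
  shows "lbeg P j \<le> j" "\<And>t. lbeg P j \<le> t \<Longrightarrow> t \<le> j \<Longrightarrow> P j \<le> P t"
    "lbeg P j = 0 \<or> P (lbeg P j - 1) < P j"
proof -
  show "lbeg P j \<le> j"
  proof (cases "\<exists>t<j. P t < P j")
    case True
    then obtain t where t: "t < j \<and> P t < P j" by blast
    have "(GREATEST t. t < j \<and> P t < P j) < j"
      using GreatestI_nat[of "\<lambda>t. t < j \<and> P t < P j" t j] t by auto
    then show ?thesis using True by (simp add: lbeg_def)
  qed (auto simp add: lbeg_def)
  show "lbeg P j = 0 \<or> P (lbeg P j - 1) < P j"
  proof (cases "\<exists>t<j. P t < P j")
    case True
    then obtain t where t: "t < j \<and> P t < P j" by blast
    have "(GREATEST t. t < j \<and> P t < P j) < j \<and> P (GREATEST t. t < j \<and> P t < P j) < P j"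
      using GreatestI_nat[of "\<lambda>t. t < j \<and> P t < P j" t j] t by auto
    then show ?thesis using True by (simp add: lbeg_def)
  qed (auto simp add: lbeg_def)
  fix t assume a: "lbeg P j \<le> t" "t \<le> j"
  show "P j \<le> P t"
  proof (rule ccontr)
    assume "\<not> P j \<le> P t"
    then have tt: "t < j \<and> P t < P j" using a by (cases "t = j") auto
    then have ex: "\<exists>t<j. P t < P j" by blast
    have "t \<le> (GREATEST t. t < j \<and> P t < P j)"
      using Greatest_le_nat[of "\<lambda>t. t < j \<and> P t < P j" t j] tt by auto
    then show False using a ex by (simp add: lbeg_def)
  qed
qed

lemma lbeg_unique:
  assumes "s \<le> j" "\<And>t. s \<le> t \<Longrightarrow> t \<le> j \<Longrightarrow> P j \<le> P t" "s = 0 \<or> P (s - 1) < P j"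
  shows "lbeg P j = s"
proof (cases "s = 0")
  case True
  have "\<forall>t<j. P j \<le> P t" using assms(2) True by auto
  then have "\<not> (\<exists>t<j. P t < P j)" by (auto simp: not_less)
  then show ?thesis using True by (simp add: lbeg_def)
next
  case False
  then have ps: "P (s - 1) < P j" "s - 1 < j" using assms by auto
  then have ex: "\<exists>t<j. P t < P j" by blast
  have g: "(GREATEST t. t < j \<and> P t < P j) = s - 1"
  proof (rule Greatest_equality)
    show "s - 1 < j \<and> P (s - 1) < P j" using ps by auto
    fix y assume "y < j \<and> P y < P j"
    then show "y \<le> s - 1" using assms(2)[of y] by (cases "s \<le> y") auto
  qed
  show ?thesis using ex g False by (simp add: lbeg_def)
qed

lemma lbeg_cong:
  assumes "\<And>t. t \<le> j \<Longrightarrow> P t = P' t"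
  shows "lbeg P j = lbeg P' j"
proof -
  have "(\<exists>t<j. P t < P j) = (\<exists>t<j. P' t < P' j)" using assms by auto
  moreover have "(\<lambda>t. t < j \<and> P t < P j) = (\<lambda>t. t < j \<and> P' t < P' j)" using assms by auto
  ultimately show ?thesis unfolding lbeg_def by simp
qed

definition refl :: "path \<Rightarrow> nat \<Rightarrow> path" where
  "refl P N = (\<lambda>t. P (N - t))"

definition rend :: "path \<Rightarrow> nat \<Rightarrow> nat \<Rightarrow> nat" where
  "rend P N j = N - lbeg (refl P N) (N - j)"

lemma rend_props:
  assumes "j \<le> N"
  shows "j \<le> rend P N j" "rend P N j \<le> N" "\<And>t. j \<le> t \<Longrightarrow> t \<le> rend P N j \<Longrightarrow> P j \<le> P t"
    "rend P N j = N \<or> P (Suc (rend P N j)) < P j"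
proof -
  note L = lbeg_props[of "refl P N" "N - j"]
  show "j \<le> rend P N j" "rend P N j \<le> N" using L(1) assms by (auto simp: rend_def)
  fix t assume a: "j \<le> t" "t \<le> rend P N j"
  then have "lbeg (refl P N) (N - j) \<le> N - t" "N - t \<le> N - j" "t \<le> N"
    using L(1) assms by (auto simp: rend_def)
  then have "refl P N (N - j) \<le> refl P N (N - t)" using L(2) by blast
  then show "P j \<le> P t" using assms \<open>t \<le> N\<close> by (simp add: refl_def)
next
  note L = lbeg_props[of "refl P N" "N - j"]
  show "rend P N j = N \<or> P (Suc (rend P N j)) < P j"
  proof (cases "lbeg (refl P N) (N - j) = 0")
    case False
    then have "P (N - (lbeg (refl P N) (N - j) - 1)) < P (N - (N - j))" using L(3) by (auto simp: refl_def)
    moreover have "N - (lbeg (refl P N) (N - j) - 1) = Suc (rend P N j)"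
      using False L(1) assms by (auto simp: rend_def)
    ultimately show ?thesis using assms by auto
  qed (simp add: rend_def)
qed

lemma rend_unique:
  assumes "j \<le> e" "e \<le> N" "\<And>t. j \<le> t \<Longrightarrow> t \<le> e \<Longrightarrow> P j \<le> P t" "e = N \<or> P (Suc e) < P j"
  shows "rend P N j = e"
proof -
  have "lbeg (refl P N) (N - j) = N - e"
  proof (rule lbeg_unique)
    show "N - e \<le> N - j" using assms by auto
    fix t assume "N - e \<le> t" "t \<le> N - j"
    then show "refl P N (N - j) \<le> refl P N t" using assms(3)[of "N - t"] assms(1,2)
      by (auto simp: refl_def)
  next
    show "N - e = 0 \<or> refl P N (N - e - 1) < refl P N (N - j)"
    proof (cases "e = N")
      case False
      then have "N - e - 1 = N - Suc e" "N - (N - Suc e) = Suc e" "N - (N - j) = j" using assms(1,2) by auto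
      then show ?thesis using assms(4) False by (simp add: refl_def)
    qed simp
  qed
  then show ?thesis using assms by (simp add: rend_def)
qed

lemma rend_cong:
  assumes "j \<le> N" "\<And>t. j \<le> t \<Longrightarrow> t \<le> N \<Longrightarrow> P t = P' t"
  shows "rend P N j = rend P' N j"
proof -
  have "lbeg (refl P N) (N - j) = lbeg (refl P' N) (N - j)"
    by (rule lbeg_cong) (use assms in \<open>auto simp: refl_def\<close>)
  then show ?thesis by (simp add: rend_def)
qed

lemma stpD: "stp P N \<Longrightarrow> t < N \<Longrightarrow> P (Suc t) = P t + 1 \<or> P (Suc t) = P t - 1"
  by (simp add: stp_def)

lemma stp_parity:
  assumes "stp P N" "s \<le> t" "t \<le> N"
  shows "even (P t - P s + int (t - s))"
  using assms(2,3)
proof (induction t)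
  case 0 then show ?case by simp
next
  case (Suc t)
  show ?case
  proof (cases "s = Suc t")
    case False
    then have ih: "even (P t - P s + int (t - s))" using Suc by auto
    have "P (Suc t) = P t + 1 \<or> P (Suc t) = P t - 1" using stpD[OF assms(1)] Suc by auto
    moreover have "int (Suc t - s) = int (t - s) + 1" using Suc False by auto
    ultimately show ?thesis using ih by auto
  qed simp
qed

lemma even_div2_pos: "even (x::nat) \<Longrightarrow> (0 < x div 2 \<longleftrightarrow> 0 < x)"
  by (auto elim!: evenE)

lemma stp_eq_even:
  assumes "stp P N" "s \<le> t" "t \<le> N" "P s = P t"
  shows "even (t - s)"
  using stp_parity[OF assms(1-3)] assms(4) by simp

definition ust :: "path \<Rightarrow> nat \<Rightarrow> nat \<Rightarrow> bool" where
  "ust P N j \<longleftrightarrow> j < N \<and> 0 \<le> P j \<and> P (Suc j) = P j + 1 \<and> (j = 0 \<or> P (j - 1) = P j - 1)"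


definition US :: "real \<Rightarrow> path \<Rightarrow> nat \<Rightarrow> real" where
  "US a P N = (\<Sum>j\<in>{j. ust P N j}. fpow a ((rend P N j - j) div 2))"

lemma finite_ust: "finite {j. ust P N j}"
  by (rule finite_subset[of _ "{..<N}"]) (auto simp: ust_def)

lemma LP:
  assumes st: "stp P N" and P0: "P 0 = 0" and PN: "P N = 0"
    and v: "0 < v" "v < N" and pk: "P (v - 1) = h" "P (Suc v) = h" "P v = h + 1"
  shows "US a (P(v := h - 1)) N - US a P N =
     (if 0 \<le> h then gpow a ((v - 1 - lbeg P (v - 1)) div 2) + gpow a ((rend P N (Suc v) - Suc v) div 2)
        - fpow a ((v - 1 - lbeg P (v - 1)) div 2 + (rend P N (Suc v) - Suc v) div 2 + 1) else 0)"
proof -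
  define P' where "P' = P(v := h - 1)"
  define S where "S = {j. ust P N j}"
  define S' where "S' = {j. ust P' N j}"
  define g where "g = (\<lambda>j. fpow a ((rend P N j - j) div 2))"
  define g' where "g' = (\<lambda>j. fpow a ((rend P' N j - j) div 2))"
  have finS: "finite S" "finite S'" unfolding S_def S'_def by (rule finite_ust)+
  have US: "US a P N = sum g S" "US a (P(v := h - 1)) N = sum g' S'"
    unfolding US_def S_def S'_def g_def g'_def P'_def by simp_all
  have stv: "\<And>t. t < N \<Longrightarrow> P (Suc t) = P t + 1 \<or> P (Suc t) = P t - 1" using stpD[OF st] by blast
  have ust_same: "\<And>j. j \<noteq> v - 1 \<Longrightarrow> j \<noteq> v \<Longrightarrow> j \<noteq> Suc v \<Longrightarrow> ust P' N j = ust P N j"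
  proof -
    fix j assume j: "j \<noteq> v - 1" "j \<noteq> v" "j \<noteq> Suc v"
    have "P' j = P j" "P' (Suc j) = P (Suc j)" using j v by (auto simp: P'_def)
    moreover have "j = 0 \<or> P' (j - 1) = P (j - 1)" using j v by (auto simp: P'_def)
    ultimately show "ust P' N j = ust P N j" unfolding ust_def by auto
  qed
  have nv: "\<not> ust P N v" "\<not> ust P' N v" "\<not> ust P N (Suc v)" "\<not> ust P' N (v - 1)"
    using pk v by (auto simp: ust_def P'_def)
  have v1: "ust P N (v - 1) \<longleftrightarrow> 0 \<le> h \<and> (v - 1 = 0 \<or> P (v - 1 - 1) = h - 1)"
    using pk v by (auto simp: ust_def)
  have v1': "\<not> (0 \<le> h) \<Longrightarrow> \<not> ust P' N (Suc v)" using pk by (auto simp: ust_def P'_def)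
  have nv1: "\<not> (0 \<le> h) \<Longrightarrow> \<not> ust P N (v - 1)" using v1 by auto
  have rend_same: "rend P' N j = rend P N j"
    if j: "ust P N j" "j < v - 1" "P j \<noteq> h \<or> j \<noteq> lbeg P (v - 1)" for j
  proof -
    define e where "e = rend P N j"
    have jN: "j \<le> N" using j v by auto
    note R = rend_props[OF jN, where P=P, folded e_def]
    show ?thesis
    proof (cases "e < v")
      case True
      have "rend P' N j = e"
      proof (rule rend_unique)
        show "j \<le> e" "e \<le> N" using R by auto
        fix t assume "j \<le> t" "t \<le> e" then show "P' j \<le> P' t" using R(3) True j v
          by (auto simp: P'_def)
      next
        show "e = N \<or> P' (Suc e) < P' j"
        proof (cases "Suc e = v")
          case True
          then have "P v < P j" using R(4) v by auto
          then show ?thesis using True j v pk by (auto simp: P'_def)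
        next
          case False then show ?thesis using R(4) j \<open>e < v\<close> v by (auto simp: P'_def)
        qed
      qed
      then show ?thesis using e_def by simp
    next
      case False
      then have le: "P j \<le> h" using R(3)[of "v - 1"] j pk by auto
      have ne: "P j \<noteq> h"
      proof
        assume eq: "P j = h"
        have "lbeg P (v - 1) = j"
        proof (rule lbeg_unique)
          show "j \<le> v - 1" using j by auto
          fix t assume "j \<le> t" "t \<le> v - 1" then show "P (v - 1) \<le> P t"
            using R(3)[of t] False pk eq by auto
        next
          show "j = 0 \<or> P (j - 1) < P (v - 1)" using j(1) eq pk by (auto simp: ust_def)
        qed
        then show False using j(3) eq by auto
      qed
      have "rend P' N j = e"
      proof (rule rend_unique)
        show "j \<le> e" "e \<le> N" using R by auto
        fix t assume "j \<le> t" "t \<le> e" then show "P' j \<le> P' t" using R(3) j v le ne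
          by (auto simp: P'_def)
      next
        show "e = N \<or> P' (Suc e) < P' j" using R(4) j v False by (auto simp: P'_def)
      qed
      then show ?thesis using e_def by simp
    qed
  qed
  have rend_far: "rend P' N j = rend P N j" if "Suc v < j" "j \<le> N" for j
    by (rule rend_cong) (use that in \<open>auto simp: P'_def\<close>)
  show ?thesis
  proof (cases "0 \<le> h")
    case False
    have SS: "S' = S"
    proof -
      have "ust P' N j = ust P N j" for j
      proof -
        consider "j = v - 1" | "j = v" | "j = Suc v" | "j \<noteq> v - 1 \<and> j \<noteq> v \<and> j \<noteq> Suc v" by blast
        then show ?thesis
        proof cases
          case 1 then show ?thesis using nv nv1 False by auto
        next
          case 2 then show ?thesis using nv by auto
        next
          case 3 then show ?thesis using nv v1' False by auto
        qed (use ust_same in auto)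
      qed
      then show ?thesis unfolding S_def S'_def by auto
    qed
    have "sum g' S' = sum g S"
      unfolding SS
    proof (rule sum.cong)
      fix j assume jS: "j \<in> S"
      have jn: "j \<noteq> v - 1" "j \<noteq> v" "j \<noteq> Suc v" using jS nv nv1 False unfolding S_def by auto
      have "P j \<noteq> h" using jS False unfolding S_def ust_def by auto
      then have "rend P' N j = rend P N j"
      proof (cases "j < v - 1")
        case True then show ?thesis using rend_same jS \<open>P j \<noteq> h\<close> unfolding S_def by blast
      next
        case False then show ?thesis using rend_far jn jS unfolding S_def ust_def by auto
      qed
      then show "g' j = g j" unfolding g_def g'_def by simp
    qed simp
    then show ?thesis using US False by simp
  next
    case True
    define j0 where "j0 = lbeg P (v - 1)"
    define E where "E = rend P N (Suc v)"
    note Lb = lbeg_props[of P "v - 1", folded j0_def]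
    have SvN: "Suc v \<le> N" using v by auto
    note Re = rend_props[OF SvN, where P=P, folded E_def]
    have Pj0: "P j0 = h"
    proof (cases "j0 = 0")
      case True
      then have "h \<le> 0" using Lb(2)[of 0] pk P0 by auto
      then show ?thesis using True P0 \<open>0 \<le> h\<close> by auto
    next
      case False
      then have "P (j0 - 1) < h" "h \<le> P j0" using Lb pk by auto
      moreover have "P j0 = P (j0 - 1) + 1 \<or> P j0 = P (j0 - 1) - 1" using stv[of "j0 - 1"] False Lb(1) v by auto
      ultimately show ?thesis by auto
    qed
    have ge_j0: "\<And>t. j0 \<le> t \<Longrightarrow> t \<le> v - 1 \<Longrightarrow> h \<le> P t" using Lb(2) pk by auto
    have ust_j0: "ust P N j0"
    proof -
      have "P (Suc j0) = h + 1"
      proof (cases "j0 = v - 1")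
        case True then show ?thesis using pk v by auto
      next
        case False
        then have "h \<le> P (Suc j0)" using ge_j0[of "Suc j0"] Lb(1) by auto
        moreover have "P (Suc j0) = P j0 + 1 \<or> P (Suc j0) = P j0 - 1" using stv[of j0] Lb(1) v by auto
        ultimately show ?thesis using Pj0 by auto
      qed
      moreover have "j0 = 0 \<or> P (j0 - 1) = h - 1"
      proof (cases "j0 = 0")
        case False
        then have "P (j0 - 1) < h" using Lb pk by auto
        moreover have "P j0 = P (j0 - 1) + 1 \<or> P j0 = P (j0 - 1) - 1" using stv[of "j0 - 1"] False Lb(1) v by auto
        ultimately show ?thesis using Pj0 by auto
      qed simp
      ultimately show ?thesis using Pj0 True Lb(1) v unfolding ust_def by auto
    qed
    have ev: "even (v - 1 - j0)" using stp_eq_even[OF st Lb(1)] Pj0 pk v by auto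
    define l where "l = (v - 1 - j0) div 2"
    define r where "r = (E - Suc v) div 2"
    have PE: "P E = h"
    proof (cases "E = N")
      case True
      then have "h \<le> 0" using Re(3)[of N] pk PN v by auto
      then show ?thesis using True PN \<open>0 \<le> h\<close> by auto
    next
      case False
      then have "P (Suc E) < h" "h \<le> P E" using Re pk by auto
      moreover have "P (Suc E) = P E + 1 \<or> P (Suc E) = P E - 1" using stv[of E] False Re(2) by auto
      ultimately show ?thesis by auto
    qed
    have rend_j0: "rend P N j0 = E"
    proof (rule rend_unique)
      show "j0 \<le> E" "E \<le> N" using Lb(1) Re by auto
      fix t assume t: "j0 \<le> t" "t \<le> E"
      consider "t \<le> v - 1" | "t = v" | "Suc v \<le> t" by linarith
      then show "P j0 \<le> P t"
      proof cases
        case 1 then show ?thesis using ge_j0 t Pj0 by auto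
      next
        case 2 then show ?thesis using pk Pj0 by auto
      next
        case 3 then show ?thesis using Re(3)[of t] t pk Pj0 by auto
      qed
    next
      show "E = N \<or> P (Suc E) < P j0" using Re(4) pk Pj0 by auto
    qed
    have rend'_j0: "rend P' N j0 = v - 1"
    proof (rule rend_unique)
      show "j0 \<le> v - 1" "v - 1 \<le> N" using Lb(1) v by auto
      fix t assume "j0 \<le> t" "t \<le> v - 1" then show "P' j0 \<le> P' t"
        using ge_j0 Pj0 v Lb(1) by (auto simp: P'_def)
    next
      show "v - 1 = N \<or> P' (Suc (v - 1)) < P' j0" using v Pj0 Lb(1) by (auto simp: P'_def)
    qed
    have rend'_Sv: "rend P' N (Suc v) = E" unfolding E_def
      by (rule rend_cong) (use v in \<open>auto simp: P'_def\<close>)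
    have gj0: "g j0 = fpow a (l + r + 1)"
    proof -
      have "E - j0 = (v - 1 - j0) + 2 + (E - Suc v)" using Lb(1) Re(1) v by auto
      moreover obtain k where k: "v - 1 - j0 = 2 * k" using ev by (rule evenE)
      ultimately have "E - j0 = 2 * (k + 1) + (E - Suc v)" by simp
      then have "(E - j0) div 2 = k + 1 + (E - Suc v) div 2" by simp
      then have "(E - j0) div 2 = l + r + 1" using k unfolding l_def r_def by simp
      then show ?thesis unfolding g_def rend_j0 by simp
    qed
    have l_pos: "j0 \<in> S' \<longleftrightarrow> 0 < l"
    proof -
      have "j0 \<in> S' \<longleftrightarrow> j0 < v - 1"
      proof (cases "j0 = v - 1")
        case True then show ?thesis using nv unfolding S'_def by auto
      next
        case False
        then have "ust P' N j0 = ust P N j0" using ust_same Lb(1) v by auto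
        then show ?thesis using ust_j0 False Lb(1) unfolding S'_def by auto
      qed
      moreover have "j0 < v - 1 \<longleftrightarrow> 0 < l" using even_div2_pos[OF ev] unfolding l_def by auto
      ultimately show ?thesis by simp
    qed
    have r_pos: "Suc v \<in> S' \<longleftrightarrow> 0 < r"
    proof -
      have "Suc v \<in> S' \<longleftrightarrow> Suc v < N \<and> P (Suc (Suc v)) = h + 1"
        using pk True v unfolding S'_def ust_def P'_def by auto
      also have "\<dots> \<longleftrightarrow> Suc (Suc (Suc v)) \<le> E"
      proof
        assume a: "Suc v < N \<and> P (Suc (Suc v)) = h + 1"
        have "E \<noteq> Suc v" using Re(4) a pk by auto
        moreover have "E \<noteq> Suc (Suc v)"
        proof
          assume e: "E = Suc (Suc v)"
          show False
          proof (cases "E = N")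
            case True then show False using PN PE a e \<open>0 \<le> h\<close> by auto
          next
            case False
            then have "P (Suc E) = P E + 1 \<or> P (Suc E) = P E - 1" using stv[of E] Re(2) by auto
            then show False using Re(4) False PE a e pk by auto
          qed
        qed
        ultimately show "Suc (Suc (Suc v)) \<le> E" using Re(1) by auto
      next
        assume a: "Suc (Suc (Suc v)) \<le> E"
        then have "h \<le> P (Suc (Suc v))" using Re(3)[of "Suc (Suc v)"] pk by auto
        moreover have "P (Suc (Suc v)) = P (Suc v) + 1 \<or> P (Suc (Suc v)) = P (Suc v) - 1"
          using stv[of "Suc v"] a Re(2) by auto
        ultimately show "Suc v < N \<and> P (Suc (Suc v)) = h + 1" using a Re(2) pk by auto
      qed
      also have "\<dots> \<longleftrightarrow> 0 < r" unfolding r_def using Re(1) by auto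
      finally show ?thesis .
    qed
    have j0_ne: "j0 \<noteq> Suc v" using Lb(1) v by auto
    have v1_S: "v - 1 \<in> S \<Longrightarrow> v - 1 = j0"
    proof -
      assume "v - 1 \<in> S"
      then have "v - 1 = 0 \<or> P (v - 1 - 1) = h - 1" using v1 unfolding S_def by auto
      then have "lbeg P (v - 1) = v - 1"
        by (intro lbeg_unique) (use pk in auto)
      then show "v - 1 = j0" unfolding j0_def by simp
    qed
    define C where "C = {j. ust P N j \<and> j \<noteq> j0 \<and> j \<noteq> v - 1 \<and> j \<noteq> v \<and> j \<noteq> Suc v}"
    have C1: "S - {j0} = C" using v1_S nv unfolding S_def C_def by auto
    have C2: "S' - {j0, Suc v} = C"
    proof (intro set_eqI iffI)
      fix x assume "x \<in> S' - {j0, Suc v}"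
      then have x: "ust P' N x" "x \<noteq> j0" "x \<noteq> Suc v" unfolding S'_def by auto
      then have "x \<noteq> v - 1" "x \<noteq> v" using nv by metis+
      then show "x \<in> C" using x ust_same unfolding C_def by auto
    next
      fix x assume "x \<in> C"
      then show "x \<in> S' - {j0, Suc v}" using ust_same unfolding C_def S'_def by auto
    qed
    have gC: "sum g' C = sum g C"
    proof (rule sum.cong)
      fix j assume jC: "j \<in> C"
      have "rend P' N j = rend P N j"
      proof (cases "j < v - 1")
        case True then show ?thesis using rend_same jC unfolding C_def j0_def by blast
      next
        case False then show ?thesis using rend_far jC unfolding C_def ust_def by auto
      qed
      then show "g' j = g j" unfolding g_def g'_def by simp
    qed simp
    have s1: "sum g S = g j0 + sum g C"
      using sum.remove[OF finS(1), of j0 g] ust_j0 C1 unfolding S_def by auto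
    have s2: "sum g' S' = sum g' (S' \<inter> {j0, Suc v}) + sum g' C"
      using sum.Int_Diff[OF finS(2), of g' "{j0, Suc v}"] C2 by simp
    have s3: "sum g' (S' \<inter> {j0, Suc v}) = (if j0 \<in> S' then g' j0 else 0) + (if Suc v \<in> S' then g' (Suc v) else 0)"
    proof -
      have "S' \<inter> {j0, Suc v} = (if j0 \<in> S' then {j0} else {}) \<union> (if Suc v \<in> S' then {Suc v} else {})" by auto
      then show ?thesis using j0_ne by (auto simp: sum.union_disjoint)
    qed
    have s4: "(if j0 \<in> S' then g' j0 else 0) = gpow a l"
      using l_pos rend'_j0 unfolding g'_def gpow_def l_def by auto
    have s5: "(if Suc v \<in> S' then g' (Suc v) else 0) = gpow a r"
      using r_pos rend'_Sv unfolding g'_def gpow_def r_def by auto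
    show ?thesis using US s1 s2 s3 s4 s5 gC gj0 True unfolding l_def r_def j0_def E_def by simp
  qed
qed

lemma stp_upd:
  assumes "stp P N" "0 < v" "v < N" "P (v - 1) = P (Suc v)" "x = P (v - 1) + 1 \<or> x = P (v - 1) - 1"
  shows "stp (P(v := x)) N"
  unfolding stp_def
proof (intro allI impI)
  fix t assume t: "t < N"
  consider "Suc t = v" | "t = v" | "Suc t \<noteq> v \<and> t \<noteq> v" by blast
  then show "(P(v := x)) (Suc t) = (P(v := x)) t + 1 \<or> (P(v := x)) (Suc t) = (P(v := x)) t - 1"
  proof cases
    case 1 then have "t = v - 1" by auto
    then show ?thesis using 1 assms by auto
  next
    case 2 then show ?thesis using assms by auto
  next
    case 3 then show ?thesis using stpD[OF assms(1) t] by auto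
  qed
qed

definition lpc :: "path \<Rightarrow> nat \<Rightarrow> nat" where
  "lpc P v = (v - 1 - lbeg P (v - 1)) div 2"

definition rpc :: "path \<Rightarrow> nat \<Rightarrow> nat \<Rightarrow> nat" where
  "rpc P N v = (rend P N (Suc v) - Suc v) div 2"

definition SS :: "real \<Rightarrow> nat \<Rightarrow> nat \<Rightarrow> real" where
  "SS a l r = gpow a l + gpow a r - fpow a (l + r + 1)"

lemma LP':
  assumes st: "stp P N" and P0: "P 0 = 0" and PN: "P N = 0"
    and v: "0 < v" "v < N" and pk: "P (v - 1) = h" "P (Suc v) = h" "P v = h + 1"
  shows "US a (P(v := h - 1)) N - US a P N = (if 0 \<le> h then SS a (lpc P v) (rpc P N v) else 0)"
  using LP[OF assms] unfolding SS_def lpc_def rpc_def by simp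

lemma RV:
  assumes st: "stp P N" and P0: "P 0 = 0" and PN: "P N = 0"
    and v: "0 < v" "v < N" and pk: "P (v - 1) = g" "P (Suc v) = g" "P v = g - 1"
  shows "US a (P(v := g + 1)) N - US a P N = (if 0 \<le> g then - SS a (lpc P v) (rpc P N v) else 0)"
proof -
  define P' where "P' = P(v := g + 1)"
  have st': "stp P' N" unfolding P'_def by (rule stp_upd) (use assms in auto)
  have P0': "P' 0 = 0" "P' N = 0" using assms by (auto simp: P'_def)
  have pk': "P' (v - 1) = g" "P' (Suc v) = g" "P' v = g + 1" using assms by (auto simp: P'_def)
  have bk: "P'(v := g - 1) = P" using pk unfolding P'_def by auto
  have L: "lpc P' v = lpc P v" unfolding lpc_def
    by (subst lbeg_cong[of "v - 1" P' P]) (use v in \<open>auto simp: P'_def\<close>)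
  have R: "rpc P' N v = rpc P N v" unfolding rpc_def
    by (subst rend_cong[of "Suc v" N P' P]) (use v in \<open>auto simp: P'_def\<close>)
  have X: "US a P N - US a P' N = (if 0 \<le> g then SS a (lpc P v) (rpc P N v) else 0)"
    using LP'[OF st' P0' v pk', of a] unfolding bk L R .
  have "US a P' N - US a P N = (if 0 \<le> g then - SS a (lpc P v) (rpc P N v) else 0)"
    using X by auto
  then show ?thesis unfolding P'_def .
qed

lemma lbeg_val:
  assumes st: "stp P N" and P0: "P 0 = 0" and j: "j \<le> N" and c: "0 \<le> P j \<or> 0 < lbeg P j"
  shows "P (lbeg P j) = P j"
proof (cases "lbeg P j = 0")
  case True
  then have "P j \<le> 0" using lbeg_props(2)[of P j 0] P0 by auto
  then show ?thesis using True c P0 by auto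
next
  case False
  note L = lbeg_props[of P j]
  have "P (lbeg P j - 1) < P j" "P j \<le> P (lbeg P j)" using L False by auto
  moreover have "P (lbeg P j) = P (lbeg P j - 1) + 1 \<or> P (lbeg P j) = P (lbeg P j - 1) - 1"
    using stpD[OF st, of "lbeg P j - 1"] False L(1) j by auto
  ultimately show ?thesis by auto
qed

lemma stp_refl: "stp P N \<Longrightarrow> stp (refl P N) N"
  unfolding stp_def refl_def
proof (intro allI impI)
  fix t assume a: "\<forall>t<N. P (Suc t) = P t + 1 \<or> P (Suc t) = P t - 1" "t < N"
  then have "P (Suc (N - Suc t)) = P (N - Suc t) + 1 \<or> P (Suc (N - Suc t)) = P (N - Suc t) - 1" by auto
  moreover have "Suc (N - Suc t) = N - t" using a by auto
  ultimately show "P (N - Suc t) = P (N - t) + 1 \<or> P (N - Suc t) = P (N - t) - 1" by auto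
qed

lemma rpc_refl: "v < N \<Longrightarrow> rpc P N v = lpc (refl P N) (N - v)"
proof -
  assume v: "v < N"
  have "lbeg (refl P N) (N - Suc v) \<le> N - Suc v" by (rule lbeg_props)
  then show ?thesis unfolding rpc_def lpc_def rend_def using v
    by (simp add: diff_diff_add)
qed

lemma lpc_pos:
  assumes st: "stp P N" and P0: "P 0 = 0" and v: "0 < v" "v \<le> N" and h: "0 \<le> P (v - 1)"
  shows "0 < lpc P v \<longleftrightarrow> 2 \<le> v \<and> P (v - 2) = P (v - 1) + 1"
proof -
  define j0 where "j0 = lbeg P (v - 1)"
  note L = lbeg_props[of P "v - 1", folded j0_def]
  have Pj0: "P j0 = P (v - 1)" using lbeg_val[OF st P0, of "v - 1"] h v unfolding j0_def by auto
  have ev: "even (v - 1 - j0)" using stp_eq_even[OF st L(1)] Pj0 v by auto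
  have "0 < lpc P v \<longleftrightarrow> j0 < v - 1" unfolding lpc_def j0_def[symmetric]
    using even_div2_pos[OF ev] L(1) by auto
  also have "\<dots> \<longleftrightarrow> 2 \<le> v \<and> P (v - 2) = P (v - 1) + 1"
  proof
    assume a: "j0 < v - 1"
    then have "P (v - 1) \<le> P (v - 2)" using L(2)[of "v - 2"] by auto
    moreover have "P (Suc (v - 2)) = P (v - 2) + 1 \<or> P (Suc (v - 2)) = P (v - 2) - 1"
      using stpD[OF st, of "v - 2"] a v by auto
    moreover have "Suc (v - 2) = v - 1" using a by auto
    ultimately show "2 \<le> v \<and> P (v - 2) = P (v - 1) + 1" using a by auto
  next
    assume a: "2 \<le> v \<and> P (v - 2) = P (v - 1) + 1"
    show "j0 < v - 1"
    proof (rule ccontr)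
      assume "\<not> j0 < v - 1"
      then have "j0 = v - 1" using L(1) by auto
      then have "P (v - 1 - 1) < P (v - 1)" using L(3) a by auto
      moreover have "v - 1 - 1 = v - 2" by auto
      ultimately show False using a by auto
    qed
  qed
  finally show ?thesis .
qed

lemma rpc_pos:
  assumes st: "stp P N" and PN: "P N = 0" and v: "v < N" and h: "0 \<le> P (Suc v)"
  shows "0 < rpc P N v \<longleftrightarrow> v + 2 \<le> N \<and> P (v + 2) = P (Suc v) + 1"
proof -
  define R where "R = refl P N"
  have stR: "stp R N" using stp_refl[OF st] unfolding R_def .
  have R0: "R 0 = 0" using PN unfolding R_def refl_def by simp
  have RR: "R (N - v - 1) = P (Suc v)" using v unfolding R_def refl_def by (simp add: Suc_diff_Suc)
  have L: "0 < lpc R (N - v) \<longleftrightarrow> 2 \<le> N - v \<and> R (N - v - 2) = R (N - v - 1) + 1"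
    using lpc_pos[OF stR R0, of "N - v"] v h RR by auto
  have "2 \<le> N - v \<Longrightarrow> R (N - v - 2) = P (v + 2)" unfolding R_def refl_def by auto
  moreover have "2 \<le> N - v \<longleftrightarrow> v + 2 \<le> N" by auto
  ultimately have "0 < lpc R (N - v) \<longleftrightarrow> v + 2 \<le> N \<and> P (v + 2) = P (Suc v) + 1"
    using L RR by auto
  then show ?thesis using rpc_refl[OF v, of P] unfolding R_def by simp
qed

lemma lpc_bound: "2 * lpc P v \<le> v - 1"
  unfolding lpc_def by auto

lemma rpc_bound: "v < N \<Longrightarrow> 2 * rpc P N v + v + 1 \<le> N"
proof -
  assume "v < N"
  then have "rend P N (Suc v) \<le> N" "Suc v \<le> rend P N (Suc v)" using rend_props(1,2)[of "Suc v" N P] by auto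
  moreover have "2 * ((rend P N (Suc v) - Suc v) div 2) \<le> rend P N (Suc v) - Suc v" by simp
  ultimately show ?thesis unfolding rpc_def by linarith
qed


lemma stp_up_sum:
  assumes "\<And>t. a \<le> t \<Longrightarrow> t < b \<Longrightarrow> P (Suc t) = P t + 1" "a \<le> b"
  shows "P b = P a + int (b - a)"
  using assms(2,1)
proof (induction b rule: dec_induct)
  case (step k)
  then have "P (Suc k) = P k + 1" by auto
  then show ?case using step by auto
qed simp

lemma lbeg_mono:
  assumes "a \<le> b" "\<And>t. a \<le> t \<Longrightarrow> t \<le> b \<Longrightarrow> P b \<le> P t"
  shows "lbeg P b \<le> lbeg P a"
proof (cases "\<exists>t<b. P t < P b")
  case False then show ?thesis by (auto simp add: lbeg_def)
next
  case True
  define g where "g = (GREATEST t. t < b \<and> P t < P b)"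
  obtain t where t: "t < b" "P t < P b" using True by blast
  have g: "g < b" "P g < P b" using GreatestI_nat[of "\<lambda>t. t < b \<and> P t < P b" t b] t unfolding g_def by auto
  have ga: "g < a" using assms(2)[of g] g by (cases "a \<le> g") auto
  have "P g < P a" using g assms(2)[of a] assms(1) by auto
  then have ex: "\<exists>t<a. P t < P a" using ga by blast
  have "g \<le> (GREATEST t. t < a \<and> P t < P a)"
    using Greatest_le_nat[of "\<lambda>t. t < a \<and> P t < P a" g a] ga \<open>P g < P a\<close> by auto
  then show ?thesis using True ex unfolding lbeg_def g_def by auto
qed

definition lmin :: "path \<Rightarrow> nat \<Rightarrow> nat" where
  "lmin P v = Suc (GREATEST t. t < v - 1 \<and> P (Suc t) < P t)"

lemma lmin_props:
  assumes st: "stp P N" and P0: "P 0 = 0" and v: "2 \<le> v" "v < N"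
    and h: "P (v - 1) \<le> 0" and pk: "P v = P (v - 1) + 1" and lm: "P (v - 2) = P (v - 1) - 1"
  shows "1 \<le> lmin P v" "lmin P v + 2 \<le> v" "P (lmin P v - 1) = P (lmin P v) + 1"
    "\<And>t. lmin P v \<le> t \<Longrightarrow> t < v \<Longrightarrow> P (Suc t) = P t + 1"
proof -
  have ex: "\<exists>t. t < v - 1 \<and> P (Suc t) < P t"
  proof (rule ccontr)
    assume nex: "\<not> (\<exists>t. t < v - 1 \<and> P (Suc t) < P t)"
    have "\<And>t. 0 \<le> t \<Longrightarrow> t < v - 1 \<Longrightarrow> P (Suc t) = P t + 1"
    proof -
      fix t assume "0 \<le> t" "t < v - 1"
      then have "t < N" "\<not> P (Suc t) < P t" using v nex by auto
      then show "P (Suc t) = P t + 1" using stpD[OF st, of t] by auto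
    qed
    then have "P (v - 1) = P 0 + int (v - 1 - 0)" by (intro stp_up_sum) auto
    then show False using h P0 v by auto
  qed
  then obtain t0 where t0: "t0 < v - 1" "P (Suc t0) < P t0" by blast
  define g where "g = (GREATEST t. t < v - 1 \<and> P (Suc t) < P t)"
  have g: "g < v - 1" "P (Suc g) < P g" using GreatestI_nat[of "\<lambda>t. t < v - 1 \<and> P (Suc t) < P t" t0 "v - 1"] t0
    unfolding g_def by auto
  have gmax: "\<And>t. t < v - 1 \<Longrightarrow> P (Suc t) < P t \<Longrightarrow> t \<le> g"
    using Greatest_le_nat[of "\<lambda>t. t < v - 1 \<and> P (Suc t) < P t" _ "v - 1"] unfolding g_def by auto
  have lm_eq: "lmin P v = Suc g" unfolding lmin_def g_def by simp
  have gd: "P (Suc g) = P g - 1" using stpD[OF st, of g] g v by auto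
  have gne: "g \<noteq> v - 2"
  proof
    assume "g = v - 2"
    then have "Suc g = v - 1" using v by auto
    then show False using g lm \<open>g = v - 2\<close> by auto
  qed
  show "1 \<le> lmin P v" using lm_eq by simp
  show "lmin P v + 2 \<le> v" using lm_eq g gne by auto
  show "P (lmin P v - 1) = P (lmin P v) + 1" using lm_eq gd by simp
  fix t assume t: "lmin P v \<le> t" "t < v"
  show "P (Suc t) = P t + 1"
  proof (cases "t = v - 1")
    case True then show ?thesis using pk v by auto
  next
    case False
    then have "t < v - 1" using t by auto
    moreover have "\<not> P (Suc t) < P t" using gmax[of t] t lm_eq \<open>t < v - 1\<close> by auto
    ultimately show ?thesis using stpD[OF st, of t] v by auto
  qed
qed

lemma lmin_char:
  assumes "1 \<le> w" "w + 2 \<le> u" "P (w - 1) = P w + 1" "\<And>t. w \<le> t \<Longrightarrow> t < u \<Longrightarrow> P (Suc t) = P t + 1"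
  shows "lmin P u = w"
proof -
  have "(GREATEST t. t < u - 1 \<and> P (Suc t) < P t) = w - 1"
  proof (rule Greatest_equality)
    show "w - 1 < u - 1 \<and> P (Suc (w - 1)) < P (w - 1)" using assms by auto
    fix y assume y: "y < u - 1 \<and> P (Suc y) < P y"
    show "y \<le> w - 1"
    proof (rule ccontr)
      assume "\<not> y \<le> w - 1"
      then have "w \<le> y" "y < u" using assms(1) y by auto
      then have "P (Suc y) = P y + 1" using assms(4)[of y] by auto
      then show False using y by auto
    qed
  qed
  then show ?thesis unfolding lmin_def using assms(1) by auto
qed

definition rmin :: "path \<Rightarrow> nat \<Rightarrow> nat \<Rightarrow> nat" where
  "rmin P N v = N - lmin (refl P N) (N - v)"

lemma rmin_char:
  assumes "w + 1 \<le> N" "u + 2 \<le> w" "P (Suc w) = P w + 1" "\<And>t. u \<le> t \<Longrightarrow> t < w \<Longrightarrow> P (Suc t) = P t - 1"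
  shows "rmin P N u = w"
proof -
  have "lmin (refl P N) (N - u) = N - w"
  proof (rule lmin_char)
    show "1 \<le> N - w" "N - w + 2 \<le> N - u" using assms by auto
    show "refl P N (N - w - 1) = refl P N (N - w) + 1" using assms(1,3)
      by (simp add: refl_def Suc_diff_Suc)
    fix t assume t: "N - w \<le> t" "t < N - u"
    have "P (Suc (N - Suc t)) = P (N - Suc t) - 1" using assms(4)[of "N - Suc t"] t assms by auto
    moreover have "Suc (N - Suc t) = N - t" using t by auto
    ultimately show "refl P N (Suc t) = refl P N t + 1" unfolding refl_def by auto
  qed
  then show ?thesis unfolding rmin_def using assms by auto
qed

lemma SS_zero: "l = 0 \<or> r = 0 \<Longrightarrow> SS a l r = gpow a (l + r) - fpow a (l + r + 1)"
  unfolding SS_def gpow_def by auto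

lemma SS_comm: "SS a l r = SS a r l"
  unfolding SS_def by (simp add: add.commute add.left_commute)

lemma cc_nonneg: "0 < a \<Longrightarrow> a < 1 \<Longrightarrow> 0 \<le> cc a n"
  unfolding cc_def by auto

lemma stp_scale: "stp P N \<Longrightarrow> c = 1 \<or> c = -1 \<Longrightarrow> stp (\<lambda>t. c * P t) N"
  unfolding stp_def by (auto simp: algebra_simps)

lemma piece_sum_bound:
  assumes "v < N" "N = 2 * n"
  shows "lpc P v + rpc Q N v + 1 \<le> n"
  using lpc_bound[of P v] rpc_bound[OF assms(1), of Q] assms by auto

locale pset =
  fixes H :: path and N n :: nat and a :: real
  assumes st: "stp H N" and H0: "H 0 = 0" and HN: "H N = 0" and Nn: "N = 2 * n"
    and a: "0 < a" "a < 1"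
begin

definition ext where "ext v \<longleftrightarrow> 0 < v \<and> v < N \<and> H (v - 1) = H (Suc v)"
definition LM where "LM v \<longleftrightarrow> 2 \<le> v \<and> H (v - 1) - H (v - 2) = H v - H (v - 1)"
definition RM where "RM v \<longleftrightarrow> v + 2 \<le> N \<and> H (v + 2) - H (Suc v) = H (Suc v) - H v"
definition AA where "AA = {v. ext v \<and> (LM v \<or> RM v)}"
definition sg where "sg v = H v - H (v - 1)"
definition PP where "PP v = (\<lambda>t. sg v * H t)"
definition QQ where "QQ v = (\<lambda>t. - (sg v * H t))"
definition hh where "hh v = PP v (v - 1)"
definition Dlt where "Dlt v = (if 0 \<le> hh v then SS a (lpc (PP v) v) (rpc (PP v) N v) else 0)
   + (if hh v \<le> 0 then - SS a (lpc (QQ v) v) (rpc (QQ v) N v) else 0)"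
definition BB where "BB = {v \<in> AA. hh v \<le> 0 \<and> LM v \<noteq> RM v}"
definition pt where "pt v = (if LM v then lmin (PP v) v else rmin (PP v) N v)"
definition xB where "xB v = (if LM v then lpc (QQ v) v else rpc (QQ v) N v)"

lemma stepH: "t < N \<Longrightarrow> H (Suc t) = H t + 1 \<or> H (Suc t) = H t - 1"
  using stpD[OF st] by blast

lemma sg_cases: "ext v \<Longrightarrow> sg v = 1 \<or> sg v = -1"
  using stepH[of "v - 1"] unfolding ext_def sg_def by auto

lemma sg_sq: "ext v \<Longrightarrow> sg v * sg v = 1"
  using sg_cases by fastforce

lemma PP_path: "ext v \<Longrightarrow> stp (PP v) N \<and> PP v 0 = 0 \<and> PP v N = 0"
  unfolding PP_def using stp_scale[OF st] sg_cases H0 HN by auto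

lemma QQ_path: "ext v \<Longrightarrow> stp (QQ v) N \<and> QQ v 0 = 0 \<and> QQ v N = 0"
proof -
  assume e: "ext v"
  have "QQ v = (\<lambda>t. (- sg v) * H t)" unfolding QQ_def by auto
  moreover have "- sg v = 1 \<or> - sg v = -1" using sg_cases[OF e] by auto
  ultimately have "stp (QQ v) N" using stp_scale[OF st, of "- sg v"] by simp
  then show ?thesis using H0 HN by (simp add: QQ_def)
qed

lemma QQ_PP: "QQ v t = - PP v t" unfolding QQ_def PP_def by simp

lemma ext_vals:
  assumes e: "ext v"
  shows "PP v (v - 1) = hh v" "PP v (Suc v) = hh v" "PP v v = hh v + 1"
    "QQ v (v - 1) = - hh v" "QQ v (Suc v) = - hh v" "QQ v v = - hh v - 1"
proof -
  have s: "sg v * sg v = 1" using sg_sq[OF e] .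
  have Hv: "H v = H (v - 1) + sg v" unfolding sg_def by simp
  show 1: "PP v (v - 1) = hh v" unfolding hh_def ..
  show 2: "PP v (Suc v) = hh v" using e unfolding hh_def PP_def ext_def by simp
  show 3: "PP v v = hh v + 1" unfolding hh_def PP_def using s Hv by (simp add: algebra_simps)
  show "QQ v (v - 1) = - hh v" "QQ v (Suc v) = - hh v" "QQ v v = - hh v - 1"
    using 1 2 3 by (simp_all add: QQ_PP)
qed

lemma LM_PP: "ext v \<Longrightarrow> LM v \<longleftrightarrow> 2 \<le> v \<and> PP v (v - 2) = hh v - 1"
proof -
  assume e: "ext v"
  have Hv: "H v - H (v - 1) = sg v" unfolding sg_def ..
  show ?thesis using sg_cases[OF e] Hv unfolding LM_def PP_def hh_def by (elim disjE) auto
qed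

lemma notLM_PP: "ext v \<Longrightarrow> 2 \<le> v \<Longrightarrow> \<not> LM v \<longleftrightarrow> PP v (v - 2) = hh v + 1"
proof -
  assume e: "ext v" and v: "2 \<le> v"
  have st': "stp (PP v) N" using PP_path[OF e] by auto
  have "PP v (Suc (v - 2)) = PP v (v - 2) + 1 \<or> PP v (Suc (v - 2)) = PP v (v - 2) - 1"
    using stpD[OF st', of "v - 2"] e v unfolding ext_def by auto
  moreover have "Suc (v - 2) = v - 1" using v by auto
  ultimately show ?thesis using LM_PP[OF e] v ext_vals[OF e] by auto
qed

lemma RM_PP: "ext v \<Longrightarrow> RM v \<longleftrightarrow> v + 2 \<le> N \<and> PP v (v + 2) = hh v - 1"
proof -
  assume e: "ext v"
  have Hv: "H v - H (v - 1) = sg v" unfolding sg_def ..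
  have h1: "H (Suc v) = H (v - 1)" using e unfolding ext_def by simp
  show ?thesis using sg_cases[OF e] Hv h1 unfolding RM_def PP_def hh_def by (elim disjE) auto
qed

lemma notRM_PP: "ext v \<Longrightarrow> v + 2 \<le> N \<Longrightarrow> \<not> RM v \<longleftrightarrow> PP v (v + 2) = hh v + 1"
proof -
  assume e: "ext v" and v: "v + 2 \<le> N"
  have st': "stp (PP v) N" using PP_path[OF e] by auto
  have "PP v (Suc (Suc v)) = PP v (Suc v) + 1 \<or> PP v (Suc (Suc v)) = PP v (Suc v) - 1"
    using stpD[OF st', of "Suc v"] v by auto
  then show ?thesis using RM_PP[OF e] v ext_vals[OF e] by (auto simp: numeral_2_eq_2)
qed

lemma pc1: "ext v \<Longrightarrow> 0 \<le> hh v \<Longrightarrow> 0 < lpc (PP v) v \<longleftrightarrow> 2 \<le> v \<and> \<not> LM v"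
proof -
  assume e: "ext v" and h: "0 \<le> hh v"
  have "0 < lpc (PP v) v \<longleftrightarrow> 2 \<le> v \<and> PP v (v - 2) = PP v (v - 1) + 1"
    using lpc_pos[of "PP v" N v] PP_path[OF e] e h ext_vals[OF e] unfolding ext_def by auto
  then show ?thesis using notLM_PP[OF e] ext_vals[OF e] by auto
qed

lemma pc2: "ext v \<Longrightarrow> 0 \<le> hh v \<Longrightarrow> 0 < rpc (PP v) N v \<longleftrightarrow> v + 2 \<le> N \<and> \<not> RM v"
proof -
  assume e: "ext v" and h: "0 \<le> hh v"
  have "0 < rpc (PP v) N v \<longleftrightarrow> v + 2 \<le> N \<and> PP v (v + 2) = PP v (Suc v) + 1"
    using rpc_pos[of "PP v" N v] PP_path[OF e] e h ext_vals[OF e] unfolding ext_def by auto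
  then show ?thesis using notRM_PP[OF e] ext_vals[OF e] by auto
qed

lemma pc3: "ext v \<Longrightarrow> hh v \<le> 0 \<Longrightarrow> 0 < lpc (QQ v) v \<longleftrightarrow> LM v"
proof -
  assume e: "ext v" and h: "hh v \<le> 0"
  have "0 < lpc (QQ v) v \<longleftrightarrow> 2 \<le> v \<and> QQ v (v - 2) = QQ v (v - 1) + 1"
    using lpc_pos[of "QQ v" N v] QQ_path[OF e] e h ext_vals[OF e] unfolding ext_def by auto
  then show ?thesis using LM_PP[OF e] ext_vals[OF e] by (auto simp: QQ_PP)
qed

lemma pc4: "ext v \<Longrightarrow> hh v \<le> 0 \<Longrightarrow> 0 < rpc (QQ v) N v \<longleftrightarrow> RM v"
proof -
  assume e: "ext v" and h: "hh v \<le> 0"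
  have "0 < rpc (QQ v) N v \<longleftrightarrow> v + 2 \<le> N \<and> QQ v (v + 2) = QQ v (Suc v) + 1"
    using rpc_pos[of "QQ v" N v] QQ_path[OF e] e h ext_vals[OF e] unfolding ext_def by auto
  then show ?thesis using RM_PP[OF e] ext_vals[OF e] by (auto simp: QQ_PP)
qed

lemma AA_n2: "v \<in> AA \<Longrightarrow> 2 \<le> n"
  using Nn unfolding AA_def ext_def LM_def RM_def by auto

lemma lpc_le_n: "ext v \<Longrightarrow> lpc P v + 1 \<le> n"
  using piece_sum_bound[of v N n P P] Nn unfolding ext_def by auto

lemma rpc_le_n: "ext v \<Longrightarrow> rpc P N v + 1 \<le> n"
  using piece_sum_bound[of v N n P P] Nn unfolding ext_def by auto

lemma SS_one_zero:
  assumes "l = 0 \<or> r = 0" "l + r + 1 \<le> n"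
  shows "SS a l r \<le> - dd a (l + r)" "SS a l r \<le> - cc a n" "SS a l r \<le> 0"
proof -
  show 1: "SS a l r \<le> - dd a (l + r)" using SS_zero[OF assms(1)] gpow_le[of a "l + r"] a by simp
  show 2: "SS a l r \<le> - cc a n" using 1 dd_lower[OF a assms(2)] by linarith
  show "SS a l r \<le> 0" using 2 cc_nonneg[OF a, of n] by linarith
qed

lemma nonB_bound:
  assumes v: "v \<in> AA" "v \<notin> BB"
  shows "Dlt v + cc a n \<le> 0"
proof -
  have e: "ext v" and lr: "LM v \<or> RM v" using v unfolding AA_def by auto
  have n2: "2 \<le> n" using AA_n2 v by auto
  have c0: "0 \<le> cc a n" using cc_nonneg[OF a] .
  have bnd: "lpc P v + rpc Q N v + 1 \<le> n" for P Q using piece_sum_bound[of v N n P Q] e Nn unfolding ext_def by auto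
  show ?thesis
  proof (cases "0 < hh v")
    case True
    have "lpc (PP v) v = 0 \<or> rpc (PP v) N v = 0" using lr pc1[OF e] pc2[OF e] True by auto
    then have "SS a (lpc (PP v) v) (rpc (PP v) N v) \<le> - cc a n"
      using SS_one_zero(2) bnd[of "PP v" "PP v"] by blast
    then show ?thesis using True unfolding Dlt_def by auto
  next
    case False
    then have h: "hh v \<le> 0" by auto
    then have both: "LM v" "RM v" using v lr unfolding BB_def by auto
    have pos: "1 \<le> lpc (QQ v) v" "1 \<le> rpc (QQ v) N v" using pc3[OF e h] pc4[OF e h] both by auto
    have "- SS a (lpc (QQ v) v) (rpc (QQ v) N v) \<le> 2 * fpow a 2 - 3 * fpow a 1"
      using mm_bound[OF a pos] pos unfolding SS_def gpow_def by simp
    then have m: "- SS a (lpc (QQ v) v) (rpc (QQ v) N v) \<le> - 3 * cc a n" using two_three[OF a n2] by linarith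
    have s: "(if 0 \<le> hh v then SS a (lpc (PP v) v) (rpc (PP v) N v) else 0) \<le> 0"
    proof (cases "0 \<le> hh v")
      case True
      then have "lpc (PP v) v = 0" "rpc (PP v) N v = 0" using pc1[OF e] pc2[OF e] both by auto
      then show ?thesis using True SS_one_zero(3)[of "lpc (PP v) v" "rpc (PP v) N v"] bnd[of "PP v" "PP v"] by auto
    qed simp
    show ?thesis using m s h c0 unfolding Dlt_def by auto
  qed
qed

lemma B_bound:
  assumes v: "v \<in> BB"
  shows "Dlt v \<le> dd a (xB v)" "1 \<le> xB v" "xB v + 1 \<le> n"
proof -
  have e: "ext v" and h: "hh v \<le> 0" and x: "LM v \<noteq> RM v" using v unfolding BB_def AA_def by auto
  have bnd: "lpc P v + rpc Q N v + 1 \<le> n" for P Q using piece_sum_bound[of v N n P Q] e Nn unfolding ext_def by auto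
  have s: "(if 0 \<le> hh v then SS a (lpc (PP v) v) (rpc (PP v) N v) else 0) \<le> 0"
  proof (cases "0 \<le> hh v")
    case True
    then have "lpc (PP v) v = 0 \<or> rpc (PP v) N v = 0" using pc1[OF e] pc2[OF e] x by auto
    then show ?thesis using True SS_one_zero(3)[of "lpc (PP v) v" "rpc (PP v) N v"] bnd[of "PP v" "PP v"] by auto
  qed simp
  have q: "- SS a (lpc (QQ v) v) (rpc (QQ v) N v) = dd a (xB v) \<and> 1 \<le> xB v"
  proof (cases "LM v")
    case True
    then have "0 < lpc (QQ v) v" "rpc (QQ v) N v = 0" using pc3[OF e h] pc4[OF e h] x by auto
    then show ?thesis using True unfolding xB_def SS_def gpow_def dd_def by auto
  next
    case False
    then have "0 < rpc (QQ v) N v" "lpc (QQ v) v = 0" using pc3[OF e h] pc4[OF e h] x by auto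
    then show ?thesis using False unfolding xB_def SS_def gpow_def dd_def by auto
  qed
  show "Dlt v \<le> dd a (xB v)" using s q h unfolding Dlt_def by auto
  show "1 \<le> xB v" using q by auto
  show "xB v + 1 \<le> n" using lpc_le_n[OF e] rpc_le_n[OF e] unfolding xB_def by auto
qed

lemma partL:
  assumes v: "v \<in> BB" "LM v"
  shows "pt v \<in> AA" "pt v < v" "RM (pt v)" "PP (pt v) = QQ v" "QQ (pt v) = PP v"
    "0 \<le> hh (pt v)" "- hh v \<le> hh (pt v)" "rpc (PP (pt v)) N (pt v) = 0"
    "lpc (PP (pt v)) (pt v) + 1 \<le> xB v"
    "1 \<le> pt v" "pt v + 2 \<le> v" "PP v (pt v - 1) = PP v (pt v) + 1"
    "\<And>t. pt v \<le> t \<Longrightarrow> t < v \<Longrightarrow> PP v (Suc t) = PP v t + 1"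
    "hh (pt v) = int (v - pt v) - hh v - 2" "sg (pt v) = - sg v"
proof -
  define P where "P = PP v"
  define u where "u = pt v"
  have e: "ext v" and h: "hh v \<le> 0" using v unfolding BB_def AA_def by auto
  have pth: "stp P N" "P 0 = 0" "P N = 0" using PP_path[OF e] unfolding P_def by auto
  have vals: "P (v - 1) = hh v" "P (Suc v) = hh v" "P v = hh v + 1" using ext_vals[OF e] unfolding P_def by auto
  have lm: "2 \<le> v" "P (v - 2) = hh v - 1" using LM_PP[OF e] v unfolding P_def by auto
  have vN: "v < N" using e unfolding ext_def by auto
  have ueq: "u = lmin P v" unfolding u_def pt_def P_def using v by simp
  note LP = lmin_props[OF pth(1,2) lm(1) vN, folded ueq]
  have L: "1 \<le> u" "u + 2 \<le> v" "P (u - 1) = P u + 1" "\<And>t. u \<le> t \<Longrightarrow> t < v \<Longrightarrow> P (Suc t) = P t + 1"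
    using LP vals lm h by auto
  have Pt: "P t = P u + int (t - u)" if "u \<le> t" "t \<le> v" for t
    by (rule stp_up_sum) (use L(4) that in auto)
  have Pu: "P u = hh v + 1 - int (v - u)" using Pt[of v] vals L by auto
  have Pu1: "P (Suc u) = P u + 1" "P (u + 2) = P u + 2" using Pt[of "Suc u"] Pt[of "u + 2"] L by auto
  have eu: "ext u"
  proof -
    have "P (u - 1) = P (Suc u)" using L Pu1 by auto
    then have "sg v * H (u - 1) = sg v * H (Suc u)" unfolding P_def PP_def by simp
    then have "H (u - 1) = H (Suc u)" using sg_cases[OF e] by auto
    then show ?thesis using L vN unfolding ext_def by auto
  qed
  have sgu: "sg u = - sg v"
  proof -
    have "P u - P (u - 1) = -1" using L by auto
    then have "sg v * (H u - H (u - 1)) = -1" unfolding P_def PP_def by (simp add: algebra_simps)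
    then have "H u - H (u - 1) = - sg v" using sg_cases[OF e] by (elim disjE) auto
    then show ?thesis by (simp add: sg_def)
  qed
  have PPu: "PP u = QQ v" unfolding PP_def QQ_def using sgu by auto
  have QQu: "QQ u = PP v" unfolding PP_def QQ_def using sgu by auto
  have hhu: "hh u = int (v - u) - hh v - 2"
  proof -
    have "hh u = - P (u - 1)" unfolding hh_def PPu P_def QQ_PP ..
    then show ?thesis using L(3) Pu by simp
  qed
  have RMu: "RM u"
  proof -
    have "PP u (u + 2) = hh u - 1" unfolding PPu QQ_PP using Pu1 hhu Pu unfolding P_def by simp
    then show ?thesis using RM_PP[OF eu] L vN by auto
  qed
  have rpc0: "rpc (PP u) N u = 0"
  proof -
    have "rend (QQ v) N (Suc u) = Suc u"
      by (rule rend_unique) (use L vN Pu1 in \<open>auto simp: QQ_PP P_def\<close>)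
    then show ?thesis unfolding rpc_def PPu by simp
  qed
  have lpcb: "lpc (PP u) u + 1 \<le> lpc (QQ v) v"
  proof -
    define Q where "Q = QQ v"
    have "lbeg Q (v - 1) \<le> lbeg Q (u - 1)"
    proof (rule lbeg_mono)
      show "u - 1 \<le> v - 1" using L by auto
      fix t assume t: "u - 1 \<le> t" "t \<le> v - 1"
      have "P t \<le> P (v - 1)"
      proof (cases "t = u - 1")
        case True then show ?thesis using L(3) Pu vals L(2) by auto
      next
        case False
        then have "u \<le> t" using t L by auto
        then show ?thesis using Pt[of t] Pt[of "v - 1"] t L by auto
      qed
      then show "Q (v - 1) \<le> Q t" unfolding Q_def QQ_PP P_def by simp
    qed
    moreover have "lbeg Q (u - 1) \<le> u - 1" by (rule lbeg_props)
    ultimately have "(u - 1 - lbeg Q (u - 1)) + 2 \<le> v - 1 - lbeg Q (v - 1)" using L by auto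
    then have "(u - 1 - lbeg Q (u - 1) + 2) div 2 \<le> (v - 1 - lbeg Q (v - 1)) div 2" by (rule div_le_mono)
    then show ?thesis unfolding lpc_def PPu Q_def by simp
  qed
  show "pt v \<in> AA" using eu RMu unfolding AA_def u_def by auto
  show "pt v < v" "1 \<le> pt v" "pt v + 2 \<le> v" using L unfolding u_def by auto
  show "RM (pt v)" using RMu unfolding u_def .
  show "PP (pt v) = QQ v" "QQ (pt v) = PP v" using PPu QQu unfolding u_def by auto
  show "0 \<le> hh (pt v)" "- hh v \<le> hh (pt v)" "hh (pt v) = int (v - pt v) - hh v - 2"
    using hhu h L unfolding u_def by auto
  show "rpc (PP (pt v)) N (pt v) = 0" using rpc0 unfolding u_def .
  show "lpc (PP (pt v)) (pt v) + 1 \<le> xB v" using lpcb v unfolding u_def xB_def by auto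
  show "PP v (pt v - 1) = PP v (pt v) + 1" using L unfolding u_def P_def by auto
  show "sg (pt v) = - sg v" using sgu unfolding u_def .
  show "\<And>t. pt v \<le> t \<Longrightarrow> t < v \<Longrightarrow> PP v (Suc t) = PP v t + 1" using L unfolding u_def P_def by auto
qed

lemma refl_pset: "pset (refl H N) N n a"
  using stp_refl[OF st] H0 HN Nn a unfolding pset_def refl_def by auto

end

context pset begin

interpretation R: pset "refl H N" N n a by (rule refl_pset)

lemma R_H: "t \<le> N \<Longrightarrow> refl H N (N - t) = H t" unfolding refl_def by simp

lemma R_ext: "w \<le> N \<Longrightarrow> R.ext (N - w) \<longleftrightarrow> ext w"
proof -
  assume w: "w \<le> N"
  show ?thesis
  proof (cases "0 < w \<and> w < N")
    case True
    then have "N - w - 1 = N - Suc w" "Suc (N - w) = N - (w - 1)" by auto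
    then show ?thesis using True unfolding R.ext_def ext_def unfolding refl_def by auto
  next
    case False then show ?thesis using w unfolding R.ext_def ext_def by auto
  qed
qed

lemma R_LM: "w \<le> N \<Longrightarrow> R.LM (N - w) \<longleftrightarrow> RM w"
proof -
  assume w: "w \<le> N"
  show ?thesis
  proof (cases "w + 2 \<le> N")
    case True
    then have "N - w - 1 = N - Suc w" "N - w - 2 = N - (w + 2)" by auto
    then show ?thesis using True unfolding R.LM_def RM_def unfolding refl_def by auto
  next
    case False then show ?thesis using w unfolding R.LM_def RM_def by auto
  qed
qed

lemma R_RM: "w \<le> N \<Longrightarrow> R.RM (N - w) \<longleftrightarrow> LM w"
proof -
  assume w: "w \<le> N"
  show ?thesis
  proof (cases "2 \<le> w")
    case True
    then have "N - w + 2 = N - (w - 2)" "Suc (N - w) = N - (w - 1)" using w by auto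
    moreover have "N - (N - w) = w" "N - (w - 1) \<le> N" using w by auto
    ultimately show ?thesis using True w unfolding R.RM_def LM_def unfolding refl_def by auto
  next
    case False then show ?thesis using w unfolding R.RM_def LM_def by auto
  qed
qed

lemma R_sg: "ext w \<Longrightarrow> R.sg (N - w) = sg w"
proof -
  assume e: "ext w"
  then have "N - w - 1 = N - Suc w" "w < N" unfolding ext_def by auto
  then show ?thesis using e unfolding R.sg_def sg_def ext_def unfolding refl_def by auto
qed

lemma R_PP: "ext w \<Longrightarrow> R.PP (N - w) = refl (PP w) N"
  unfolding R.PP_def PP_def using R_sg unfolding refl_def by auto

lemma R_QQ: "ext w \<Longrightarrow> R.QQ (N - w) = refl (QQ w) N"
  unfolding R.QQ_def QQ_def using R_sg unfolding refl_def by auto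

lemma R_hh: "ext w \<Longrightarrow> R.hh (N - w) = hh w"
proof -
  assume e: "ext w"
  then have "N - w - 1 = N - Suc w" "w < N" unfolding ext_def by auto
  then show ?thesis unfolding R.hh_def hh_def R_PP[OF e] using e unfolding ext_def refl_def PP_def by auto
qed

lemma lpc_refl: "w < N \<Longrightarrow> lpc (refl P N) (N - w) = rpc P N w"
  using rpc_refl by simp

lemma rpc_refl2: "0 < w \<Longrightarrow> w \<le> N \<Longrightarrow> rpc (refl P N) N (N - w) = lpc P w"
proof -
  assume w: "0 < w" "w \<le> N"
  have "rpc (refl P N) N (N - w) = lpc (refl (refl P N) N) (N - (N - w))"
    using rpc_refl[of "N - w" N "refl P N"] w by auto
  also have "\<dots> = lpc (refl (refl P N) N) w" using w by simp
  also have "\<dots> = lpc P w" unfolding lpc_def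
    by (subst lbeg_cong[of "w - 1" "refl (refl P N) N" P]) (use w in \<open>auto simp: refl_def\<close>)
  finally show ?thesis .
qed

lemma R_Dlt: "ext w \<Longrightarrow> R.Dlt (N - w) = Dlt w"
proof -
  assume e: "ext w"
  have w: "0 < w" "w < N" using e unfolding ext_def by auto
  show ?thesis unfolding R.Dlt_def Dlt_def R_hh[OF e] R_PP[OF e] R_QQ[OF e]
    lpc_refl[OF w(2)] rpc_refl2[OF w(1) less_imp_le[OF w(2)]] by (simp add: SS_comm)
qed

lemma R_AA: "w \<le> N \<Longrightarrow> N - w \<in> R.AA \<longleftrightarrow> w \<in> AA"
  unfolding R.AA_def AA_def using R_ext R_LM R_RM by auto

lemma R_BB: "w \<le> N \<Longrightarrow> N - w \<in> R.BB \<longleftrightarrow> w \<in> BB"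
proof -
  assume w: "w \<le> N"
  show ?thesis
  proof (cases "ext w")
    case True
    then show ?thesis unfolding R.BB_def BB_def using R_AA[OF w] R_hh[OF True] R_LM[OF w] R_RM[OF w] by auto
  next
    case False
    then show ?thesis using R_AA[OF w] unfolding R.BB_def BB_def AA_def by auto
  qed
qed

lemma R_xB: "w \<in> BB \<Longrightarrow> R.xB (N - w) = xB w"
proof -
  assume b: "w \<in> BB"
  then have e: "ext w" and x: "LM w \<noteq> RM w" unfolding BB_def AA_def by auto
  have w: "0 < w" "w < N" using e unfolding ext_def by auto
  show ?thesis unfolding R.xB_def xB_def R_LM[OF less_imp_le[OF w(2)]] R_QQ[OF e]
    lpc_refl[OF w(2)] rpc_refl2[OF w(1) less_imp_le[OF w(2)]] using x by auto
qed

lemma partR: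
  assumes v: "v \<in> BB" "RM v"
  shows "pt v \<in> AA" "v < pt v" "LM (pt v)" "PP (pt v) = QQ v" "QQ (pt v) = PP v"
    "0 \<le> hh (pt v)" "- hh v \<le> hh (pt v)" "lpc (PP (pt v)) (pt v) = 0"
    "rpc (PP (pt v)) N (pt v) + 1 \<le> xB v"
    "pt v + 1 \<le> N" "v + 2 \<le> pt v" "PP v (Suc (pt v)) = PP v (pt v) + 1"
    "\<And>t. v \<le> t \<Longrightarrow> t < pt v \<Longrightarrow> PP v (Suc t) = PP v t - 1"
    "hh (pt v) = int (pt v - v) - hh v - 2" "sg (pt v) = - sg v"
proof -
  have e: "ext v" and nl: "\<not> LM v" using v unfolding BB_def AA_def by auto
  have vN: "0 < v" "v < N" using e unfolding ext_def by auto
  have vR: "N - v \<in> R.BB" "R.LM (N - v)" using R_BB[of v] R_LM[of v] v vN by auto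
  note RP = R.partL[OF vR]
  define u' where "u' = R.pt (N - v)"
  have u'N: "u' + 2 \<le> N - v" "1 \<le> u'" using RP unfolding u'_def by auto
  have ptv: "pt v = N - u'"
  proof -
    have "R.pt (N - v) = lmin (refl (PP v) N) (N - v)" unfolding R.pt_def using vR R_PP[OF e] by simp
    then show ?thesis unfolding pt_def rmin_def u'_def using nl by simp
  qed
  have u'eq: "u' = N - pt v" using ptv u'N by auto
  have ptN: "pt v \<le> N" using ptv by auto
  have AAu: "pt v \<in> AA" using RP(1) R_AA[OF ptN] unfolding u'_def[symmetric] u'eq by simp
  then have eu: "ext (pt v)" unfolding AA_def by auto
  show "pt v \<in> AA" by (rule AAu)
  show "v < pt v" "pt v + 1 \<le> N" "v + 2 \<le> pt v" using u'N ptv by auto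
  show "LM (pt v)" using RP(3) R_RM[OF ptN] unfolding u'_def[symmetric] u'eq by simp
  have sgu: "sg (pt v) = - sg v" using RP(15) R_sg[OF eu] R_sg[OF e] unfolding u'_def[symmetric] u'eq by simp
  show "sg (pt v) = - sg v" by (rule sgu)
  show "PP (pt v) = QQ v" "QQ (pt v) = PP v" unfolding PP_def QQ_def using sgu by auto
  have hhu: "R.hh u' = hh (pt v)" using R_hh[OF eu] unfolding u'eq .
  show "0 \<le> hh (pt v)" "- hh v \<le> hh (pt v)" using RP(6,7) hhu R_hh[OF e] unfolding u'_def[symmetric] by auto
  show "hh (pt v) = int (pt v - v) - hh v - 2"
  proof -
    have "R.hh u' = int (N - v - u') - R.hh (N - v) - 2" using RP(14) unfolding u'_def .
    moreover have "N - v - u' = pt v - v" using ptv u'N by auto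
    ultimately show ?thesis using hhu R_hh[OF e] by simp
  qed
  have ptv0: "0 < pt v" "pt v < N" using eu unfolding ext_def by auto
  show "lpc (PP (pt v)) (pt v) = 0"
    using RP(8) R_PP[OF eu] rpc_refl2[OF ptv0(1) less_imp_le[OF ptv0(2)]] unfolding u'_def[symmetric] u'eq by simp
  show "rpc (PP (pt v)) N (pt v) + 1 \<le> xB v"
    using RP(9) R_PP[OF eu] lpc_refl[OF ptv0(2)] R_xB[OF v(1)] unfolding u'_def[symmetric] u'eq by simp
  show "PP v (Suc (pt v)) = PP v (pt v) + 1"
  proof -
    have "R.PP (N - v) (u' - 1) = R.PP (N - v) u' + 1" using RP(12) unfolding u'_def .
    moreover have "u' - 1 = N - Suc (pt v)" using ptv u'N by auto
    ultimately have "R.PP (N - v) (N - Suc (pt v)) = R.PP (N - v) (N - pt v) + 1" using u'eq by simp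
    then have "refl (PP v) N (N - Suc (pt v)) = refl (PP v) N (N - pt v) + 1" by (simp only: R_PP[OF e])
    then show ?thesis using ptv0 by (simp add: refl_def)
  qed
  fix t assume t: "v \<le> t" "t < pt v"
  have "R.PP (N - v) (Suc (N - Suc t)) = R.PP (N - v) (N - Suc t) + 1"
    using RP(13)[of "N - Suc t"] t ptv u'N unfolding u'_def[symmetric] by auto
  moreover have "Suc (N - Suc t) = N - t" using t ptv0 by auto
  ultimately have "R.PP (N - v) (N - t) = R.PP (N - v) (N - Suc t) + 1" by simp
  then have "refl (PP v) N (N - t) = refl (PP v) N (N - Suc t) + 1" by (simp only: R_PP[OF e])
  then show "PP v (Suc t) = PP v t - 1" using t ptv0 by (simp add: refl_def)
qed

lemma uniqL:
  assumes v: "v1 \<in> BB" "LM v1" "v2 \<in> BB" "LM v2" "pt v1 = pt v2"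
  shows "v1 = v2"
proof (rule ccontr)
  assume ne: "v1 \<noteq> v2"
  have sg: "sg v1 = sg v2" using partL(15)[OF v(1,2)] partL(15)[OF v(3,4)] v(5) by simp
  then have PPe: "PP v1 = PP v2" unfolding PP_def by simp
  have e1: "ext v1" and e2: "ext v2" using v unfolding BB_def AA_def by auto
  have pk: "PP v1 (Suc v1) = PP v1 v1 - 1" "PP v2 (Suc v2) = PP v2 v2 - 1"
    using ext_vals[OF e1] ext_vals[OF e2] by auto
  show False
  proof (cases "v1 < v2")
    case True
    have "PP v2 (Suc v1) = PP v2 v1 + 1"
      using partL(13)[OF v(3,4), of v1] partL(2,13)[OF v(1,2)] True v(5) partL(11)[OF v(1,2)] by auto
    then show False using pk PPe by auto
  next
    case False
    then have "v2 < v1" using ne by auto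
    have "PP v1 (Suc v2) = PP v1 v2 + 1"
      using partL(13)[OF v(1,2), of v2] \<open>v2 < v1\<close> v(5) partL(11)[OF v(3,4)] by auto
    then show False using pk PPe by auto
  qed
qed

lemma uniqR:
  assumes v: "v1 \<in> BB" "RM v1" "v2 \<in> BB" "RM v2" "pt v1 = pt v2"
  shows "v1 = v2"
proof (rule ccontr)
  assume ne: "v1 \<noteq> v2"
  have sg: "sg v1 = sg v2" using partR(15)[OF v(1,2)] partR(15)[OF v(3,4)] v(5) by simp
  then have PPe: "PP v1 = PP v2" unfolding PP_def by simp
  have e1: "ext v1" and e2: "ext v2" using v unfolding BB_def AA_def by auto
  have vl: "PP v1 v1 = PP v1 (v1 - 1) + 1" "PP v2 v2 = PP v2 (v2 - 1) + 1"
    using ext_vals[OF e1] ext_vals[OF e2] by auto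
  have p1: "0 < v1" "0 < v2" using e1 e2 unfolding ext_def by auto
  show False
  proof (cases "v1 < v2")
    case True
    have "PP v1 (Suc (v2 - 1)) = PP v1 (v2 - 1) - 1"
      using partR(13)[OF v(1,2), of "v2 - 1"] True partR(11)[OF v(3,4)] v(5) by auto
    then show False using vl PPe p1 by auto
  next
    case False
    then have "v2 < v1" using ne by auto
    have "PP v2 (Suc (v1 - 1)) = PP v2 (v1 - 1) - 1"
      using partR(13)[OF v(3,4), of "v1 - 1"] \<open>v2 < v1\<close> partR(11)[OF v(1,2)] v(5) by auto
    then show False using vl PPe p1 by auto
  qed
qed

lemma mutualL:
  assumes v: "v \<in> BB" "LM v" "pt v \<in> BB"
  shows "pt (pt v) = v" "Dlt v + Dlt (pt v) + 2 * cc a n \<le> 0"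
proof -
  define u where "u = pt v"
  define P where "P = PP v"
  define Q where "Q = QQ v"
  have e: "ext v" and h: "hh v \<le> 0" and nr: "\<not> RM v" using v unfolding BB_def AA_def by auto
  have ub: "u \<in> BB" using v unfolding u_def by simp
  have eu: "ext u" and hu: "hh u \<le> 0" using ub unfolding BB_def AA_def by auto
  note PL = partL[OF v(1,2), folded u_def]
  have hu0: "hh u = 0" and hv0: "hh v = 0" using PL(6,7) hu h by auto
  have uv: "u + 2 = v" using PL(14) hu0 hv0 PL(11) by auto
  have nlu: "\<not> LM u" using ub PL(3) unfolding BB_def by auto
  have PPu: "PP u = Q" "QQ u = P" using PL(4,5) unfolding P_def Q_def by auto
  show "pt (pt v) = v"
  proof -
    have "rmin Q N u = v"
    proof (rule rmin_char)
      show "v + 1 \<le> N" "u + 2 \<le> v" using e uv unfolding ext_def by auto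
      show "Q (Suc v) = Q v + 1" using ext_vals[OF e] unfolding Q_def by auto
      fix t assume "u \<le> t" "t < v"
      then show "Q (Suc t) = Q t - 1" using PL(13)[of t] unfolding Q_def QQ_PP u_def by auto
    qed
    moreover have "pt u = rmin (PP u) N u" unfolding pt_def using nlu by simp
    ultimately show ?thesis using PPu unfolding u_def by simp
  qed
  have vN: "0 < v" "v < N" using e unfolding ext_def by auto
  define x where "x = lpc Q v"
  define r where "r = rpc P N v"
  define l' where "l' = lpc Q u"
  define r' where "r' = rpc P N u"
  have x: "x = xB v" "1 \<le> x" "x + 1 \<le> n" using B_bound[OF v(1)] v(2) unfolding x_def xB_def Q_def by auto
  have lP: "lpc P v = 0" using pc1[OF e] hv0 v(2) unfolding P_def by auto
  have rQ: "rpc Q N v = 0" using pc4[OF e h] nr unfolding Q_def by auto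
  have rQu: "rpc Q N u = 0" using PL(8) PPu by simp
  have l'x: "l' + 1 \<le> x" using PL(9) PPu x(1) unfolding l'_def by simp
  have lPu: "lpc P u = 0" using pc3[OF eu hu] nlu PPu by simp
  have r'pos: "1 \<le> r'" using pc4[OF eu hu] ub PL(3) PPu unfolding r'_def by simp
  have r'r: "r \<le> r'"
  proof -
    have Pp: "stp P N" "P 0 = 0" "P N = 0" using PP_path[OF e] unfolding P_def by auto
    define E where "E = rend P N (Suc v)"
    have SvN: "Suc v \<le> N" using vN by auto
    note Re = rend_props[OF SvN, where P=P, folded E_def]
    have vals: "P (v - 1) = 0" "P (Suc v) = 0" "P v = 1" using ext_vals[OF e] hv0 unfolding P_def by auto
    have "rend P N (v - 1) = E"
    proof (rule rend_unique)
      show "v - 1 \<le> E" "E \<le> N" using Re by auto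
      fix t assume t: "v - 1 \<le> t" "t \<le> E"
      consider "t = v - 1" | "t = v" | "Suc v \<le> t" using t by linarith
      then show "P (v - 1) \<le> P t"
      proof cases
        case 3 then show ?thesis using Re(3)[of t] t vals by auto
      qed (use vals in auto)
    next
      show "E = N \<or> P (Suc E) < P (v - 1)" using Re(4) vals by auto
    qed
    moreover have "Suc u = v - 1" using uv by auto
    ultimately have "r' = (E - (v - 1)) div 2" unfolding r'_def rpc_def by simp
    moreover have "E - (v - 1) = (E - Suc v) + 2" using Re(1) vN by auto
    ultimately show ?thesis unfolding r_def rpc_def E_def by auto
  qed
  have bnd: "lpc P' w + rpc Q' N w + 1 \<le> n" if "ext w" for P' Q' w
    using piece_sum_bound[of w N n P' Q'] that Nn unfolding ext_def by auto
  have Dv: "Dlt v \<le> - dd a r + dd a x"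
  proof -
    have "SS a (lpc P v) (rpc P N v) \<le> - dd a r"
      using SS_one_zero(1)[of "lpc P v" "rpc P N v"] lP bnd[OF e, of P P] unfolding r_def by auto
    moreover have "- SS a (lpc Q v) (rpc Q N v) = dd a x"
      using rQ x unfolding x_def SS_def gpow_def dd_def by auto
    ultimately show ?thesis unfolding Dlt_def P_def[symmetric] Q_def[symmetric] using hv0 by auto
  qed
  have Du: "Dlt u \<le> - dd a l' + dd a r'"
  proof -
    have "SS a (lpc Q u) (rpc Q N u) \<le> - dd a l'"
      using SS_one_zero(1)[of "lpc Q u" "rpc Q N u"] rQu bnd[OF eu, of Q Q] unfolding l'_def by auto
    moreover have "- SS a (lpc P u) (rpc P N u) = dd a r'"
      using lPu r'pos unfolding r'_def SS_def gpow_def dd_def by auto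
    ultimately show ?thesis unfolding Dlt_def PPu using hu0 by auto
  qed
  have m1: "dd a r' \<le> dd a r" by (rule dd_antimono[OF a r'r])
  have m2: "dd a (x - 1) \<le> dd a l'" by (rule dd_antimono[OF a]) (use l'x in auto)
  have sd: "dd a x - dd a (x - 1) \<le> - a * (1 - a) * (real x + 1) powr (a - 2)"
    by (rule secdiff[OF a x(2)])
  have "real n powr (a - 2) \<le> (real x + 1) powr (a - 2)"
    by (rule powr_mono2') (use a x in auto)
  then have "a * (1 - a) * real n powr (a - 2) \<le> a * (1 - a) * (real x + 1) powr (a - 2)"
    using a by (intro mult_left_mono) auto
  then show "Dlt v + Dlt (pt v) + 2 * cc a n \<le> 0"
    using Dv Du m1 m2 sd unfolding u_def[symmetric] cc_def by auto
qed

lemma mutualR: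
  assumes v: "v \<in> BB" "RM v" "pt v \<in> BB"
  shows "pt (pt v) = v" "LM (pt v)"
proof -
  define u where "u = pt v"
  have e: "ext v" and nl: "\<not> LM v" using v unfolding BB_def AA_def by auto
  note PR = partR[OF v(1,2), folded u_def]
  have ub: "u \<in> BB" using v unfolding u_def by simp
  show "LM (pt v)" using PR(3) unfolding u_def .
  have nru: "\<not> RM u" using ub PR(3) unfolding BB_def by auto
  have "lmin (QQ v) u = v"
  proof (rule lmin_char)
    show "1 \<le> v" "v + 2 \<le> u" using e PR(11) unfolding ext_def by auto
    show "QQ v (v - 1) = QQ v v + 1" using ext_vals[OF e] by auto
    fix t assume "v \<le> t" "t < u"
    then show "QQ v (Suc t) = QQ v t + 1" using PR(13)[of t] by (auto simp: QQ_PP)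
  qed
  moreover have "pt u = lmin (PP u) u" unfolding pt_def using PR(3) by simp
  ultimately show "pt (pt v) = v" using PR(4) unfolding u_def by simp
qed

lemma finite_AA: "finite AA"
  by (rule finite_subset[of _ "{..<N}"]) (auto simp: AA_def ext_def)

lemma card_le1: "finite S \<Longrightarrow> (\<And>x y. x \<in> S \<Longrightarrow> y \<in> S \<Longrightarrow> x = y) \<Longrightarrow> card S \<le> 1"
  using card_le_Suc0_iff_eq[of S] by auto

lemma fiber_bound:
  assumes q: "q \<in> AA" "q \<notin> BB"
  shows "Dlt q + cc a n + (\<Sum>v\<in>{v \<in> BB. pt v \<notin> BB \<and> pt v = q}. Dlt v + cc a n) \<le> 0"
proof -
  define K where "K = {v \<in> BB. pt v \<notin> BB \<and> pt v = q}"
  define KL where "KL = {v \<in> K. LM v}"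
  define KR where "KR = {v \<in> K. RM v}"
  have finBB: "finite BB" using finite_AA unfolding BB_def by auto
  have finK: "finite K" "finite KL" "finite KR" using finBB unfolding K_def KL_def KR_def by auto
  have Kun: "K = KL \<union> KR" "KL \<inter> KR = {}" unfolding K_def KL_def KR_def BB_def by auto
  have cKL: "card KL \<le> 1"
    by (rule card_le1[OF finK(2)]) (use uniqL in \<open>auto simp: KL_def K_def\<close>)
  have cKR: "card KR \<le> 1"
    by (rule card_le1[OF finK(3)]) (use uniqR in \<open>auto simp: KR_def K_def\<close>)
  have eq: "q \<in> AA" using q by auto
  have e: "ext q" using q unfolding AA_def by auto
  have c0: "0 \<le> cc a n" by (rule cc_nonneg[OF a])
  have n2: "2 \<le> n" using AA_n2 q by auto
  show ?thesis
  proof (cases "K = {}")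
    case True
    then have E: "{v \<in> BB. pt v \<notin> BB \<and> pt v = q} = {}" unfolding K_def .
    show ?thesis unfolding E using nonB_bound[OF q] by simp
  next
    case False
    then obtain v0 where v0: "v0 \<in> K" by auto
    have hq: "0 \<le> hh q"
    proof -
      have "v0 \<in> BB" "pt v0 = q" using v0 unfolding K_def by auto
      then show ?thesis using partL(6)[of v0] partR(6)[of v0] unfolding BB_def by auto
    qed
    define l where "l = lpc (PP q) q"
    define r where "r = rpc (PP q) N q"
    define m where "m = l + r"
    have KLf: "r = 0 \<and> m + 1 \<le> xB v" if "v \<in> KL" for v
    proof -
      have "v \<in> BB" "LM v" "pt v = q" using that unfolding KL_def K_def by auto
      then show ?thesis using partL(8,9)[of v] unfolding m_def l_def r_def by auto
    qed
    have KRf: "l = 0 \<and> m + 1 \<le> xB v" if "v \<in> KR" for v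
    proof -
      have "v \<in> BB" "RM v" "pt v = q" using that unfolding KR_def K_def by auto
      then show ?thesis using partR(8,9)[of v] unfolding m_def l_def r_def by auto
    qed
    have Kf: "Dlt v + cc a n \<le> dd a (m + 1) + cc a n \<and> m + 2 \<le> n" if "v \<in> K" for v
    proof -
      have vb: "v \<in> BB" using that unfolding K_def by auto
      have mx: "m + 1 \<le> xB v" using KLf KRf that Kun by auto
      have "dd a (xB v) \<le> dd a (m + 1)" by (rule dd_antimono[OF a mx])
      then show ?thesis using B_bound[OF vb] mx by auto
    qed
    have m2: "m + 2 \<le> n" using Kf v0 by auto
    have lr0: "l = 0 \<or> r = 0"
    proof -
      have "LM q \<or> RM q" using q unfolding AA_def by auto
      then show ?thesis using pc1[OF e hq] pc2[OF e hq] unfolding l_def r_def by auto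
    qed
    have Dq: "Dlt q \<le> gpow a m - fpow a (m + 1)"
    proof -
      have S: "SS a l r = gpow a m - fpow a (m + 1)" using SS_zero[OF lr0] unfolding m_def by simp
      have M: "(if hh q \<le> 0 then - SS a (lpc (QQ q) q) (rpc (QQ q) N q) else 0) \<le> 0"
      proof (cases "hh q \<le> 0")
        case True
        then have both: "LM q" "RM q" using q unfolding BB_def AA_def by auto
        have pos: "1 \<le> lpc (QQ q) q" "1 \<le> rpc (QQ q) N q" using pc3[OF e True] pc4[OF e True] both by auto
        have "- SS a (lpc (QQ q) q) (rpc (QQ q) N q) \<le> 2 * fpow a 2 - 3 * fpow a 1"
          using mm_bound[OF a pos] pos unfolding SS_def gpow_def by simp
        then show ?thesis using True two_three[OF a n2] c0 by auto
      qed simp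
      show ?thesis using S M hq unfolding Dlt_def l_def r_def by auto
    qed
    have sK: "(\<Sum>v\<in>K. Dlt v + cc a n) \<le> real (card K) * (dd a (m + 1) + cc a n)"
      using sum_bounded_above[of K "\<lambda>v. Dlt v + cc a n" "dd a (m + 1) + cc a n"] Kf by auto
    have cK: "card K = card KL + card KR" using card_Un_disjoint[OF finK(2,3) Kun(2)] Kun(1) by simp
    have sd: "dd a (m + 1) - dd a m + 2 * cc a n \<le> 0"
    proof -
      have "dd a (m + 1) - dd a (m + 1 - 1) \<le> - a * (1 - a) * (real (m + 1) + 1) powr (a - 2)"
        by (rule secdiff[OF a]) auto
      moreover have "real n powr (a - 2) \<le> (real (m + 1) + 1) powr (a - 2)"
        by (rule powr_mono2') (use a m2 in auto)
      then have "a * (1 - a) * real n powr (a - 2) \<le> a * (1 - a) * (real (m + 1) + 1) powr (a - 2)"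
        using a by (intro mult_left_mono) auto
      ultimately show ?thesis unfolding cc_def by auto
    qed
    have gl: "gpow a m - fpow a (m + 1) \<le> - dd a m" using gpow_le[of a m] a by simp
    consider "card K = 1" | "card K = 2"
      using cK cKL cKR False finK(1) by (cases "card KL"; cases "card KR") auto
    then show ?thesis
    proof cases
      case 1
      then show ?thesis using Dq sK gl sd unfolding K_def[symmetric] by auto
    next
      case 2
      then have "KL \<noteq> {}" "KR \<noteq> {}" using cK cKL cKR by auto
      then obtain v1 v2 where "v1 \<in> KL" "v2 \<in> KR" by auto
      then have "m = 0" using KLf KRf unfolding m_def by auto
      then have "Dlt q \<le> - fpow a 1" using Dq by (simp add: gpow_def)
      moreover have "dd a 1 = fpow a 2 - fpow a 1" unfolding dd_def by (simp add: numeral_2_eq_2)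
      ultimately show ?thesis using sK 2 two_three[OF a n2] \<open>m = 0\<close> unfolding K_def[symmetric] by auto
    qed
  qed
qed

theorem comb_main: "(\<Sum>v\<in>AA. Dlt v + cc a n) \<le> 0"
proof -
  define g where "g = (\<lambda>v. Dlt v + cc a n)"
  define Bm where "Bm = {v \<in> BB. pt v \<in> BB}"
  define Bn where "Bn = {v \<in> BB. pt v \<notin> BB}"
  define A0 where "A0 = AA - BB"
  have finAA: "finite AA" by (rule finite_AA)
  have BA: "BB \<subseteq> AA" unfolding BB_def by auto
  have fin: "finite BB" "finite Bm" "finite Bn" "finite A0"
    using finAA BA unfolding Bm_def Bn_def A0_def by (auto intro: finite_subset)
  have s1: "sum g AA = sum g A0 + sum g BB"
    using sum.subset_diff[OF BA finAA, of g] unfolding A0_def by simp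
  have s2: "sum g BB = sum g Bm + sum g Bn"
  proof -
    have "BB = Bm \<union> Bn" "Bm \<inter> Bn = {}" unfolding Bm_def Bn_def by auto
    then show ?thesis using sum.union_disjoint[OF fin(2,3)] by simp
  qed
  have ptAA: "pt v \<in> AA" if "v \<in> BB" for v
    using partL(1)[OF that] partR(1)[OF that] that unfolding BB_def by auto
  have s3: "sum g Bn = (\<Sum>q\<in>A0. sum g {v \<in> Bn. pt v = q})"
  proof -
    have "pt ` Bn \<subseteq> A0" using ptAA unfolding Bn_def A0_def by auto
    then show ?thesis using sum.group[OF fin(3) fin(4), of pt g] by simp
  qed
  have s4: "sum g A0 + sum g Bn \<le> 0"
  proof -
    have "sum g A0 + sum g Bn = (\<Sum>q\<in>A0. g q + sum g {v \<in> Bn. pt v = q})"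
      using s3 by (simp add: sum.distrib)
    also have "\<dots> \<le> (\<Sum>q\<in>A0. 0)"
    proof (rule sum_mono)
      fix q assume q: "q \<in> A0"
      have "{v \<in> Bn. pt v = q} = {v \<in> BB. pt v \<notin> BB \<and> pt v = q}" unfolding Bn_def by auto
      then show "g q + sum g {v \<in> Bn. pt v = q} \<le> 0"
        using fiber_bound[of q] q unfolding A0_def g_def by auto
    qed
    finally show ?thesis by simp
  qed
  have invol: "pt (pt v) = v" if "v \<in> Bm" for v
  proof -
    have "v \<in> BB" "pt v \<in> BB" using that unfolding Bm_def by auto
    moreover have "LM v \<or> RM v" using that unfolding Bm_def BB_def AA_def by auto
    ultimately show ?thesis using mutualL(1) mutualR(1) by blast
  qed
  have pair: "g v + g (pt v) \<le> 0" if "v \<in> Bm" for v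
  proof -
    have vb: "v \<in> BB" "pt v \<in> BB" using that unfolding Bm_def by auto
    show ?thesis
    proof (cases "LM v")
      case True
      then show ?thesis using mutualL(2)[OF vb(1) True vb(2)] unfolding g_def by auto
    next
      case False
      then have rm: "RM v" using vb unfolding BB_def AA_def by auto
      have lmu: "LM (pt v)" and pp: "pt (pt v) = v" using mutualR[OF vb(1) rm vb(2)] by auto
      have "pt (pt v) \<in> BB" using pp vb by simp
      then show ?thesis using mutualL(2)[OF vb(2) lmu] pp unfolding g_def by auto
    qed
  qed
  have s5: "sum g Bm \<le> 0"
  proof -
    have bij: "bij_betw pt Bm Bm"
    proof (rule bij_betw_byWitness[of _ pt])
      show "\<forall>v\<in>Bm. pt (pt v) = v" "\<forall>v\<in>Bm. pt (pt v) = v" using invol by auto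
      show "pt ` Bm \<subseteq> Bm" "pt ` Bm \<subseteq> Bm" using invol unfolding Bm_def by auto
    qed
    have "sum (g \<circ> pt) Bm = sum g Bm" using sum.reindex_bij_betw[OF bij, of g] by (simp add: comp_def)
    then have "2 * sum g Bm = (\<Sum>v\<in>Bm. g v + g (pt v))" by (simp add: sum.distrib comp_def)
    also have "\<dots> \<le> 0" using pair by (intro sum_nonpos) auto
    finally show ?thesis by simp
  qed
  show ?thesis using s1 s2 s4 s5 unfolding g_def[symmetric] by linarith
qed

end


definition phiP :: "real \<Rightarrow> path \<Rightarrow> nat \<Rightarrow> real" where
  "phiP a P N = US a P N + US a (\<lambda>t. - P t) N"

context pset begin

lemma Dlt_eq:
  assumes e: "ext v"
  shows "phiP a (H(v := 2 * H (v - 1) - H v)) N - phiP a H N = Dlt v"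
proof -
  define P where "P = PP v"
  define Q where "Q = QQ v"
  define h where "h = hh v"
  have vN: "0 < v" "v < N" using e unfolding ext_def by auto
  have Pp: "stp P N" "P 0 = 0" "P N = 0" using PP_path[OF e] unfolding P_def by auto
  have Qp: "stp Q N" "Q 0 = 0" "Q N = 0" using QQ_path[OF e] unfolding Q_def by auto
  have Pv: "P (v - 1) = h" "P (Suc v) = h" "P v = h + 1" using ext_vals[OF e] unfolding P_def h_def by auto
  have Qv: "Q (v - 1) = - h" "Q (Suc v) = - h" "Q v = - h - 1" using ext_vals[OF e] unfolding Q_def h_def by auto
  have LPr: "US a (P(v := h - 1)) N - US a P N = (if 0 \<le> h then SS a (lpc P v) (rpc P N v) else 0)"
    by (rule LP'[OF Pp vN Pv])
  have RVr: "US a (Q(v := - h + 1)) N - US a Q N = (if 0 \<le> - h then - SS a (lpc Q v) (rpc Q N v) else 0)"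
    by (rule RV[OF Qp vN Qv(1,2)]) (use Qv in simp)
  have D: "Dlt v = (US a (P(v := h - 1)) N - US a P N) + (US a (Q(v := - h + 1)) N - US a Q N)"
    unfolding LPr RVr Dlt_def P_def[symmetric] Q_def[symmetric] h_def[symmetric] by auto
  show ?thesis
  proof (cases "sg v = 1")
    case True
    have PH: "P = H" unfolding P_def PP_def True by simp
    have QH: "Q = (\<lambda>t. - H t)" unfolding Q_def QQ_def True by simp
    have H1: "H(v := 2 * H (v - 1) - H v) = P(v := h - 1)" using Pv unfolding PH by auto
    have H2: "(\<lambda>t. - (P(v := h - 1)) t) = Q(v := - h + 1)" unfolding QH PH by auto
    show ?thesis unfolding phiP_def H1 H2 D using PH QH by simp
  next
    case False
    then have sgm: "sg v = -1" using sg_cases[OF e] by auto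
    have PH: "P = (\<lambda>t. - H t)" unfolding P_def PP_def sgm by simp
    have QH: "Q = H" unfolding Q_def QQ_def sgm by simp
    have H1: "H(v := 2 * H (v - 1) - H v) = Q(v := - h + 1)" using Qv unfolding QH by auto
    have H2: "(\<lambda>t. - (Q(v := - h + 1)) t) = P(v := h - 1)" unfolding QH PH by auto
    show ?thesis unfolding phiP_def H1 H2 D using PH QH by simp
  qed
qed

end

definition Hw :: "nat list \<Rightarrow> path" where
  "Hw w t = int (count_list (take t w) 1) - int (count_list (take t w) 2)"

definition stepv :: "nat \<Rightarrow> int" where
  "stepv x = (if x = 1 then 1 else if x = 2 then -1 else 0)"

lemma Hw_0[simp]: "Hw w 0 = 0" by (simp add: Hw_def)

lemma Hw_Suc: "Hw w (Suc t) = Hw w t + (if t < length w then stepv (w ! t) else 0)"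
proof (cases "t < length w")
  case True
  then have "take (Suc t) w = take t w @ [w ! t]" by (simp add: take_Suc_conv_app_nth)
  then show ?thesis using True by (simp add: Hw_def stepv_def)
next
  case False
  then show ?thesis by (simp add: Hw_def)
qed

lemma Hw_len: "count_list w 1 = count_list w 2 \<Longrightarrow> Hw w (length w) = 0"
  by (simp add: Hw_def)

lemma stepv_cases: "x \<in> {1, 2} \<Longrightarrow> stepv x = 1 \<or> stepv x = -1"
  by (auto simp: stepv_def)

lemma Hw_stp: "set w \<subseteq> {1, 2} \<Longrightarrow> stp (Hw w) (length w)"
  unfolding stp_def
proof (intro allI impI)
  fix t assume s: "set w \<subseteq> {1, 2}" and t: "t < length w"
  then have "w ! t \<in> {1, 2}" using nth_mem by blast
  then show "Hw w (Suc t) = Hw w t + 1 \<or> Hw w (Suc t) = Hw w t - 1"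
    using Hw_Suc[of w t] t stepv_cases by auto
qed

lemma cnt_take:
  assumes "i \<le> k" "j + k \<le> length w"
  shows "count_list (take i (take k (drop j w))) x + count_list (take j w) x = count_list (take (j + i) w) x"
proof -
  have "take i (take k (drop j w)) = take i (drop j w)" using assms by (simp add: min_def)
  moreover have "take (j + i) w = take j w @ take i (drop j w)" by (rule take_add)
  ultimately show ?thesis by simp
qed

lemma Hw_diff:
  assumes "i \<le> k" "j + k \<le> length w"
  shows "int (count_list (take i (take k (drop j w))) 1) - int (count_list (take i (take k (drop j w))) 2)
         = Hw w (j + i) - Hw w j"
  using cnt_take[OF assms, of 1] cnt_take[OF assms, of 2] unfolding Hw_def by linarith

definition PD :: "path \<Rightarrow> nat \<Rightarrow> nat \<Rightarrow> nat \<Rightarrow> bool" where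
  "PD P N j k \<longleftrightarrow> 0 < k \<and> j + k \<le> N \<and> P (j + k) = P j \<and> (\<forall>t. j \<le> t \<longrightarrow> t \<le> j + k \<longrightarrow> P j \<le> P t) \<and> 0 \<le> P j"

lemma pos_dyck_iff: "pos_dyck w j k \<longleftrightarrow> PD (Hw w) (length w) j k"
proof -
  define v where "v = take k (drop j w)"
  have A: "j + k \<le> length w \<Longrightarrow> (count_list v 1 = count_list v 2 \<longleftrightarrow> Hw w (j + k) = Hw w j)"
    using Hw_diff[of k k j w] unfolding v_def by auto
  have B: "j + k \<le> length w \<Longrightarrow> (\<forall>i\<in>{1..k}. count_list (take i v) 2 \<le> count_list (take i v) 1)
      \<longleftrightarrow> (\<forall>t. j \<le> t \<longrightarrow> t \<le> j + k \<longrightarrow> Hw w j \<le> Hw w t)"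
  proof
    assume jk: "j + k \<le> length w" and h: "\<forall>i\<in>{1..k}. count_list (take i v) 2 \<le> count_list (take i v) 1"
    show "\<forall>t. j \<le> t \<longrightarrow> t \<le> j + k \<longrightarrow> Hw w j \<le> Hw w t"
    proof (intro allI impI)
      fix t assume t: "j \<le> t" "t \<le> j + k"
      show "Hw w j \<le> Hw w t"
      proof (cases "t = j")
        case False
        then have "t - j \<in> {1..k}" using t by auto
        then have c: "count_list (take (t - j) v) 2 \<le> count_list (take (t - j) v) 1" using h by blast
        have tk: "t - j \<le> k" using t by auto
        have "j + (t - j) = t" using t by auto
        then have "int (count_list (take (t - j) v) 1) - int (count_list (take (t - j) v) 2) = Hw w t - Hw w j"
          using Hw_diff[OF tk jk] unfolding v_def by simp
        then show ?thesis using c by linarith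
      qed simp
    qed
  next
    assume jk: "j + k \<le> length w" and h: "\<forall>t. j \<le> t \<longrightarrow> t \<le> j + k \<longrightarrow> Hw w j \<le> Hw w t"
    show "\<forall>i\<in>{1..k}. count_list (take i v) 2 \<le> count_list (take i v) 1"
    proof
      fix i assume i: "i \<in> {1..k}"
      then have "Hw w j \<le> Hw w (j + i)" using h by auto
      then show "count_list (take i v) 2 \<le> count_list (take i v) 1"
        using Hw_diff[of i k j w] i jk unfolding v_def by auto
    qed
  qed
  have C: "count_list (take j w) 2 \<le> count_list (take j w) 1 \<longleftrightarrow> 0 \<le> Hw w j"
    unfolding Hw_def by auto
  show ?thesis unfolding pos_dyck_def PD_def Let_def v_def[symmetric] using A B C by auto
qed

lemma neg_dyck_iff: "neg_dyck w j k \<longleftrightarrow> PD (\<lambda>t. - Hw w t) (length w) j k"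
proof -
  define v where "v = take k (drop j w)"
  have A: "j + k \<le> length w \<Longrightarrow> (count_list v 2 = count_list v 1 \<longleftrightarrow> - Hw w (j + k) = - Hw w j)"
    using Hw_diff[of k k j w] unfolding v_def by auto
  have B: "j + k \<le> length w \<Longrightarrow> (\<forall>i\<in>{1..k}. count_list (take i v) 1 \<le> count_list (take i v) 2)
      \<longleftrightarrow> (\<forall>t. j \<le> t \<longrightarrow> t \<le> j + k \<longrightarrow> - Hw w j \<le> - Hw w t)"
  proof
    assume jk: "j + k \<le> length w" and h: "\<forall>i\<in>{1..k}. count_list (take i v) 1 \<le> count_list (take i v) 2"
    show "\<forall>t. j \<le> t \<longrightarrow> t \<le> j + k \<longrightarrow> - Hw w j \<le> - Hw w t"
    proof (intro allI impI)
      fix t assume t: "j \<le> t" "t \<le> j + k"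
      show "- Hw w j \<le> - Hw w t"
      proof (cases "t = j")
        case False
        then have "t - j \<in> {1..k}" using t by auto
        then have c: "count_list (take (t - j) v) 1 \<le> count_list (take (t - j) v) 2" using h by blast
        have tk: "t - j \<le> k" using t by auto
        have "j + (t - j) = t" using t by auto
        then have "int (count_list (take (t - j) v) 1) - int (count_list (take (t - j) v) 2) = Hw w t - Hw w j"
          using Hw_diff[OF tk jk] unfolding v_def by simp
        then show ?thesis using c by linarith
      qed simp
    qed
  next
    assume jk: "j + k \<le> length w" and h: "\<forall>t. j \<le> t \<longrightarrow> t \<le> j + k \<longrightarrow> - Hw w j \<le> - Hw w t"
    show "\<forall>i\<in>{1..k}. count_list (take i v) 1 \<le> count_list (take i v) 2"
    proof
      fix i assume i: "i \<in> {1..k}"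
      then have "- Hw w j \<le> - Hw w (j + i)" using h by auto
      then show "count_list (take i v) 1 \<le> count_list (take i v) 2"
        using Hw_diff[of i k j w] i jk unfolding v_def by auto
    qed
  qed
  have C: "count_list (take j w) 1 \<le> count_list (take j w) 2 \<longleftrightarrow> 0 \<le> - Hw w j"
    unfolding Hw_def by auto
  show ?thesis unfolding neg_dyck_def PD_def Let_def v_def[symmetric] using A B C by auto
qed


lemma rend_val:
  assumes st: "stp P N" and PN: "P N = 0" and j: "j \<le> N" and h: "0 \<le> P j"
  shows "P (rend P N j) = P j"
proof -
  note R = rend_props[OF j, where P=P]
  show ?thesis
  proof (cases "rend P N j = N")
    case True
    then have "P j \<le> 0" using R(3)[of N] PN j by auto
    then show ?thesis using True PN h by auto
  next
    case False
    then have "P (Suc (rend P N j)) < P j" "P j \<le> P (rend P N j)" using R by auto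
    moreover have "P (Suc (rend P N j)) = P (rend P N j) + 1 \<or> P (Suc (rend P N j)) = P (rend P N j) - 1"
      using stpD[OF st, of "rend P N j"] False R(2) by auto
    ultimately show ?thesis by auto
  qed
qed

lemma ust_PD:
  assumes st: "stp P N" and PN: "P N = 0" and u: "ust P N j"
  shows "PD P N j (rend P N j - j)"
proof -
  have j: "j < N" "0 \<le> P j" "P (Suc j) = P j + 1" using u unfolding ust_def by auto
  note R = rend_props[OF less_imp_le[OF j(1)], where P=P]
  have "rend P N j \<noteq> j" using R(4) j by auto
  then have gt: "j < rend P N j" using R(1) by auto
  show ?thesis unfolding PD_def using gt R(2,3) rend_val[OF st PN less_imp_le[OF j(1)] j(2)] j(2) by auto
qed

definition maxP :: "path \<Rightarrow> nat \<Rightarrow> nat \<Rightarrow> nat \<Rightarrow> bool" where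
  "maxP P N j k \<longleftrightarrow> \<not> (\<exists>j' k'. (j', k') \<noteq> (j, k) \<and> j' \<le> j \<and> j + k \<le> j' + k' \<and> PD P N j' k' \<and> P j' = P j)"

lemma PD_max_iff:
  assumes st: "stp P N" and P0: "P 0 = 0" and PN: "P N = 0" and pd: "PD P N j k"
  shows "maxP P N j k \<longleftrightarrow> ust P N j \<and> k = rend P N j - j"
proof
  have k: "0 < k" "j + k \<le> N" "P (j + k) = P j" "\<And>t. j \<le> t \<Longrightarrow> t \<le> j + k \<Longrightarrow> P j \<le> P t" "0 \<le> P j"
    using pd unfolding PD_def by auto
  assume m: "maxP P N j k"
  have us: "ust P N j"
  proof -
    have jN: "j < N" using k by auto
    have "P j \<le> P (Suc j)" using k(4)[of "Suc j"] k(1) by auto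
    then have up: "P (Suc j) = P j + 1" using stpD[OF st jN] by auto
    have left: "j = 0 \<or> P (j - 1) = P j - 1"
    proof (rule ccontr)
      assume "\<not> (j = 0 \<or> P (j - 1) = P j - 1)"
      then have j0: "0 < j" and pj: "P (j - 1) \<noteq> P j - 1" by auto
      have "P (Suc (j - 1)) = P (j - 1) + 1 \<or> P (Suc (j - 1)) = P (j - 1) - 1" using stpD[OF st, of "j - 1"] jN by auto
      then have pj1: "P (j - 1) = P j + 1" using j0 pj by auto
      define s where "s = lbeg P j"
      note L = lbeg_props[of P j, folded s_def]
      have Ps: "P s = P j" using lbeg_val[OF st P0, of j] k(5) jN unfolding s_def by auto
      have sj: "s < j"
      proof (rule ccontr)
        assume "\<not> s < j"
        then have "s = j" using L(1) by auto
        then show False using L(3) j0 pj1 by auto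
      qed
      have sk: "s + (j + k - s) = j + k" using sj by auto
      have allt: "P s \<le> P t" if "s \<le> t" "t \<le> s + (j + k - s)" for t
      proof (cases "t \<le> j")
        case True then show ?thesis using L(2)[of t] that Ps by auto
      next
        case False then show ?thesis using k(4)[of t] that sk Ps by auto
      qed
      have "PD P N s (j + k - s)"
        unfolding PD_def using sj k Ps sk allt by auto
      then have "\<exists>j' k'. (j', k') \<noteq> (j, k) \<and> j' \<le> j \<and> j + k \<le> j' + k' \<and> PD P N j' k' \<and> P j' = P j"
        using sj sk Ps by (intro exI[of _ s] exI[of _ "j + k - s"]) auto
      then show False using m unfolding maxP_def by blast
    qed
    show ?thesis unfolding ust_def using jN k(5) up left by auto
  qed
  have keq: "k = rend P N j - j"
  proof -
    define e where "e = rend P N j"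
    have jN: "j \<le> N" using k by auto
    note R = rend_props[OF jN, where P=P, folded e_def]
    have ge: "j + k \<le> e"
    proof (rule ccontr)
      assume "\<not> j + k \<le> e"
      then have "e < N" "P (Suc e) < P j" "Suc e \<le> j + k" using R k by auto
      then show False using k(4)[of "Suc e"] R(1) by auto
    qed
    have "\<not> j + k < e"
    proof
      assume lt: "j + k < e"
      have "PD P N j (e - j)" unfolding PD_def using lt R rend_val[OF st PN jN k(5)] k(5) unfolding e_def[symmetric]
        by auto
      then have "\<exists>j' k'. (j', k') \<noteq> (j, k) \<and> j' \<le> j \<and> j + k \<le> j' + k' \<and> PD P N j' k' \<and> P j' = P j"
        using lt by (intro exI[of _ j] exI[of _ "e - j"]) auto
      then show False using m unfolding maxP_def by blast
    qed
    then show ?thesis using ge unfolding e_def by auto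
  qed
  show "ust P N j \<and> k = rend P N j - j" using us keq by auto
next
  assume a: "ust P N j \<and> k = rend P N j - j"
  have k: "0 < k" "j + k \<le> N" "P (j + k) = P j" "\<And>t. j \<le> t \<Longrightarrow> t \<le> j + k \<Longrightarrow> P j \<le> P t" "0 \<le> P j"
    using pd unfolding PD_def by auto
  have u: "j < N" "P (Suc j) = P j + 1" "j = 0 \<or> P (j - 1) = P j - 1" using a unfolding ust_def by auto
  show "maxP P N j k" unfolding maxP_def
  proof
    assume "\<exists>j' k'. (j', k') \<noteq> (j, k) \<and> j' \<le> j \<and> j + k \<le> j' + k' \<and> PD P N j' k' \<and> P j' = P j"
    then obtain j' k' where c: "(j', k') \<noteq> (j, k)" "j' \<le> j" "j + k \<le> j' + k'" "PD P N j' k'" "P j' = P j" by blast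
    have c2: "\<And>t. j' \<le> t \<Longrightarrow> t \<le> j' + k' \<Longrightarrow> P j' \<le> P t" "j' + k' \<le> N" using c(4) unfolding PD_def by auto
    show False
    proof (cases "j' < j")
      case True
      then have "P j' \<le> P (j - 1)" using c2(1)[of "j - 1"] c(3) k(1) by auto
      then show False using u(3) True c(5) by auto
    next
      case False
      then have "j' = j" using c(2) by auto
      then have "k < k'" using c(1,3) by auto
      define e where "e = rend P N j"
      note R = rend_props[OF less_imp_le[OF u(1)], where P=P, folded e_def]
      have "e = j + k" using a R(1) unfolding e_def by auto
      then have "e < N" "P (Suc e) < P j" using R(4) \<open>k < k'\<close> c2(2) \<open>j' = j\<close> by auto
      moreover have "P j' \<le> P (Suc e)" using c2(1)[of "Suc e"] \<open>e = j + k\<close> \<open>k < k'\<close> \<open>j' = j\<close> by auto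
      ultimately show False using c(5) by auto
    qed
  qed
qed


lemma PD_cross:
  assumes st: "stp P N" and p: "PD P N j k" and q: "PD (\<lambda>t. - P t) N j' k'"
    and c: "j' \<le> j" "j + k \<le> j' + k'" "P j = - P j'"
  shows False
proof -
  have p': "0 < k" "j + k \<le> N" "\<And>t. j \<le> t \<Longrightarrow> t \<le> j + k \<Longrightarrow> P j \<le> P t" "0 \<le> P j"
    using p unfolding PD_def by auto
  have q': "\<And>t. j' \<le> t \<Longrightarrow> t \<le> j' + k' \<Longrightarrow> P t \<le> P j'" using q unfolding PD_def by auto
  have "P j \<le> P j'" using q'[of j] c by auto
  then have z: "P j = 0" using c p'(4) by auto
  have "P (Suc j) \<le> P j'" "P j \<le> P (Suc j)" using q'[of "Suc j"] p'(3)[of "Suc j"] c p'(1) by auto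
  then have "P (Suc j) = 0" using z c by auto
  moreover have "j < N" using p' by auto
  ultimately show False using stpD[OF st, of j] z by auto
qed

lemma PD_both:
  assumes st: "stp P N" and p: "PD P N j k" and q: "PD (\<lambda>t. - P t) N j k"
  shows False
proof -
  have "P j = 0" using p q unfolding PD_def by auto
  then show False using PD_cross[OF st p q] by auto
qed

lemma max_char:
  fixes P :: path and N :: nat
  defines "Q \<equiv> (\<lambda>t. - P t)"
  defines "DF \<equiv> (\<lambda>j k h. (PD P N j k \<and> h = P j) \<or> (PD Q N j k \<and> h = Q j))"
  assumes st: "stp P N"
  shows "(\<exists>h. DF j k h \<and> \<not> (\<exists>j' k'. (j', k') \<noteq> (j, k) \<and> j' \<le> j \<and> j + k \<le> j' + k' \<and> DF j' k' h))
    \<longleftrightarrow> (PD P N j k \<and> maxP P N j k) \<or> (PD Q N j k \<and> maxP Q N j k)"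
proof -
  have stQ: "stp Q N" using stp_scale[OF st, of "-1"] unfolding Q_def by simp
  have QQ: "(\<lambda>t. - Q t) = P" unfolding Q_def by simp
  show ?thesis
  proof
    assume "\<exists>h. DF j k h \<and> \<not> (\<exists>j' k'. (j', k') \<noteq> (j, k) \<and> j' \<le> j \<and> j + k \<le> j' + k' \<and> DF j' k' h)"
    then obtain h where h: "DF j k h" "\<not> (\<exists>j' k'. (j', k') \<noteq> (j, k) \<and> j' \<le> j \<and> j + k \<le> j' + k' \<and> DF j' k' h)"
      by blast
    show "(PD P N j k \<and> maxP P N j k) \<or> (PD Q N j k \<and> maxP Q N j k)"
    proof (cases "PD P N j k \<and> h = P j")
      case True
      have "maxP P N j k" unfolding maxP_def
      proof
        assume "\<exists>j' k'. (j', k') \<noteq> (j, k) \<and> j' \<le> j \<and> j + k \<le> j' + k' \<and> PD P N j' k' \<and> P j' = P j"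
        then obtain j' k' where c: "(j', k') \<noteq> (j, k)" "j' \<le> j" "j + k \<le> j' + k'" "PD P N j' k'" "P j' = P j" by blast
        then have "DF j' k' h" using True unfolding DF_def by auto
        then show False using h(2) c by blast
      qed
      then show ?thesis using True by auto
    next
      case False
      then have F: "PD Q N j k \<and> h = Q j" using h(1) unfolding DF_def by auto
      have "maxP Q N j k" unfolding maxP_def
      proof
        assume "\<exists>j' k'. (j', k') \<noteq> (j, k) \<and> j' \<le> j \<and> j + k \<le> j' + k' \<and> PD Q N j' k' \<and> Q j' = Q j"
        then obtain j' k' where c: "(j', k') \<noteq> (j, k)" "j' \<le> j" "j + k \<le> j' + k'" "PD Q N j' k'" "Q j' = Q j" by blast
        then have "DF j' k' h" using F unfolding DF_def by auto
        then show False using h(2) c by blast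
      qed
      then show ?thesis using F by auto
    qed
  next
    assume "(PD P N j k \<and> maxP P N j k) \<or> (PD Q N j k \<and> maxP Q N j k)"
    then show "\<exists>h. DF j k h \<and> \<not> (\<exists>j' k'. (j', k') \<noteq> (j, k) \<and> j' \<le> j \<and> j + k \<le> j' + k' \<and> DF j' k' h)"
    proof
      assume a: "PD P N j k \<and> maxP P N j k"
      show ?thesis
      proof (intro exI[of _ "P j"] conjI notI)
        show "DF j k (P j)" using a unfolding DF_def by auto
        assume "\<exists>j' k'. (j', k') \<noteq> (j, k) \<and> j' \<le> j \<and> j + k \<le> j' + k' \<and> DF j' k' (P j)"
        then obtain j' k' where c: "(j', k') \<noteq> (j, k)" "j' \<le> j" "j + k \<le> j' + k'" "DF j' k' (P j)" by blast
        show False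
        proof (cases "PD P N j' k' \<and> P j = P j'")
          case True then show False using a c unfolding maxP_def by auto
        next
          case False
          then have "PD Q N j' k'" "P j = Q j'" using c(4) unfolding DF_def by auto
          then show False using PD_cross[OF st, of j k j' k'] a c unfolding Q_def by auto
        qed
      qed
    next
      assume a: "PD Q N j k \<and> maxP Q N j k"
      show ?thesis
      proof (intro exI[of _ "Q j"] conjI notI)
        show "DF j k (Q j)" using a unfolding DF_def by auto
        assume "\<exists>j' k'. (j', k') \<noteq> (j, k) \<and> j' \<le> j \<and> j + k \<le> j' + k' \<and> DF j' k' (Q j)"
        then obtain j' k' where c: "(j', k') \<noteq> (j, k)" "j' \<le> j" "j + k \<le> j' + k'" "DF j' k' (Q j)" by blast
        show False
        proof (cases "PD Q N j' k' \<and> Q j = Q j'")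
          case True then show False using a c unfolding maxP_def by auto
        next
          case False
          then have "PD P N j' k'" "Q j = P j'" using c(4) unfolding DF_def by auto
          then show False using PD_cross[OF stQ, of j k j' k'] a c unfolding QQ by (auto simp: Q_def)
        qed
      qed
    qed
  qed
qed

lemma count12: "set (v :: nat list) \<subseteq> {1, 2} \<Longrightarrow> count_list v 1 + count_list v 2 = length v"
  by (induction v) auto

lemma phi_eq:
  assumes s: "set w \<subseteq> {1, 2}" and z: "count_list w 1 = count_list w 2"
  shows "phi a w = phiP a (Hw w) (length w)"
proof -
  define H where "H = Hw w"
  define N where "N = length w"
  define H' where "H' = (\<lambda>t. - H t)"
  have st: "stp H N" unfolding H_def N_def using Hw_stp[OF s] .
  have H0: "H 0 = 0" "H N = 0" unfolding H_def N_def using Hw_len[OF z] by auto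
  have st': "stp H' N" using stp_scale[OF st, of "-1"] unfolding H'_def by simp
  have H0': "H' 0 = 0" "H' N = 0" using H0 unfolding H'_def by auto
  define S1 where "S1 = (\<lambda>j. (j, rend H N j - j)) ` {j. ust H N j}"
  define S2 where "S2 = (\<lambda>j. (j, rend H' N j - j)) ` {j. ust H' N j}"
  have DFe: "dyck_factor w j k h \<longleftrightarrow> (PD H N j k \<and> h = H j) \<or> (PD H' N j k \<and> h = H' j)" for j k h
    unfolding dyck_factor_def pos_dyck_iff neg_dyck_iff H_def H'_def N_def by (auto simp: Hw_def)
  have mdf: "max_dyck_factors w = S1 \<union> S2"
  proof -
    have "(j, k) \<in> max_dyck_factors w \<longleftrightarrow> (PD H N j k \<and> maxP H N j k) \<or> (PD H' N j k \<and> maxP H' N j k)" for j k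
      unfolding max_dyck_factors_def DFe using max_char[OF st, of j k] unfolding H'_def by simp
    also have "\<dots> j k \<longleftrightarrow> (j, k) \<in> S1 \<union> S2" for j k
    proof -
      have "(PD H N j k \<and> maxP H N j k) \<longleftrightarrow> (j, k) \<in> S1"
        using PD_max_iff[OF st H0(1) H0(2)] ust_PD[OF st H0(2)] unfolding S1_def by auto
      moreover have "(PD H' N j k \<and> maxP H' N j k) \<longleftrightarrow> (j, k) \<in> S2"
        using PD_max_iff[OF st' H0'(1) H0'(2)] ust_PD[OF st' H0'(2)] unfolding S2_def by auto
      ultimately show ?thesis by auto
    qed
    finally show ?thesis by auto
  qed
  have val: "(1 + real (count_list (take k (drop j w)) 1)) powr a = fpow a (k div 2)"
    if "PD P N j k" "P = H \<or> P = H'" for P j k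
  proof -
    have jk: "j + k \<le> length w" "H (j + k) = H j" using that unfolding PD_def H'_def N_def by auto
    have "int (count_list (take k (take k (drop j w))) 1) - int (count_list (take k (take k (drop j w))) 2) = 0"
      using Hw_diff[of k k j w] jk unfolding H_def by auto
    moreover have "set (take k (drop j w)) \<subseteq> {1, 2}" using s by (meson order_trans set_drop_subset set_take_subset)
    then have "count_list (take k (drop j w)) 1 + count_list (take k (drop j w)) 2 = k"
      using count12 jk by auto
    ultimately have "count_list (take k (drop j w)) 1 = k div 2" by auto
    then show ?thesis unfolding fpow_def by simp
  qed
  have disj: "S1 \<inter> S2 = {}" unfolding S1_def S2_def ust_def H'_def by auto
  have fin: "finite S1" "finite S2" unfolding S1_def S2_def using finite_ust by auto
  have "phi a w = sum (\<lambda>(j, k). fpow a (k div 2)) (S1 \<union> S2)"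
    unfolding phi_def mdf
  proof (rule sum.cong)
    fix x assume x: "x \<in> S1 \<union> S2"
    then obtain j k where xe: "x = (j, k)" by (cases x)
    show "(case x of (j, k) \<Rightarrow> (1 + real (count_list (take k (drop j w)) 1)) powr a) = (case x of (j, k) \<Rightarrow> fpow a (k div 2))"
    proof (cases "x \<in> S1")
      case True
      then have "PD H N j k" using ust_PD[OF st H0(2)] xe unfolding S1_def by auto
      then show ?thesis using val[of H j k] xe by simp
    next
      case False
      then have "PD H' N j k" using x ust_PD[OF st' H0'(2)] xe unfolding S2_def by auto
      then show ?thesis using val[of H' j k] xe by simp
    qed
  qed simp
  also have "\<dots> = sum (\<lambda>(j, k). fpow a (k div 2)) S1 + sum (\<lambda>(j, k). fpow a (k div 2)) S2"
    using sum.union_disjoint[OF fin disj] by simp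
  also have "sum (\<lambda>(j, k). fpow a (k div 2)) S1 = US a H N"
    unfolding S1_def US_def by (subst sum.reindex) (auto simp: inj_on_def)
  also have "sum (\<lambda>(j, k). fpow a (k div 2)) S2 = US a H' N"
    unfolding S2_def US_def by (subst sum.reindex) (auto simp: inj_on_def)
  finally show ?thesis unfolding phiP_def H'_def H_def N_def by simp
qed


lemma flip_len[simp]: "length (flip i w) = length w"
  unfolding flip_def by simp

lemma flip_nth: "Suc i < length w \<Longrightarrow> k < length w \<Longrightarrow>
   flip i w ! k = (if k = Suc i then w ! i else if k = i then w ! Suc i else w ! k)"
  unfolding flip_def by (auto simp: nth_list_update)

lemma flip_set: "Suc i < length w \<Longrightarrow> set (flip i w) \<subseteq> set w"
proof -
  assume i: "Suc i < length w"
  have m: "w ! Suc i \<in> set w" "w ! i \<in> set w" using i by (auto intro!: nth_mem)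
  have "set (w[i := w ! Suc i]) \<subseteq> set w" using set_update_subset_insert[of w i "w ! Suc i"] m by auto
  moreover have "set (w[i := w ! Suc i, Suc i := w ! i]) \<subseteq> insert (w ! i) (set (w[i := w ! Suc i]))"
    by (rule set_update_subset_insert)
  ultimately show ?thesis unfolding flip_def using m by auto
qed

lemma Hw_flip:
  assumes s: "set w \<subseteq> {1, 2}" and i: "Suc i < length w" and ne: "w ! i \<noteq> w ! Suc i"
  shows "Hw (flip i w) = (Hw w)(Suc i := 2 * Hw w i - Hw w (Suc i))"
proof
  fix t
  have "w ! i \<in> set w" "w ! Suc i \<in> set w" using i by (auto intro!: nth_mem)
  then have wi: "w ! i \<in> {1, 2}" "w ! Suc i \<in> {1, 2}" using s by auto
  have opp: "stepv (w ! Suc i) = - stepv (w ! i)" using wi ne by (auto simp: stepv_def)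
  have HS: "Hw w (Suc i) = Hw w i + stepv (w ! i)" using Hw_Suc[of w i] i by simp
  show "Hw (flip i w) t = ((Hw w)(Suc i := 2 * Hw w i - Hw w (Suc i))) t"
  proof (induction t)
    case 0 then show ?case by simp
  next
    case (Suc t)
    have HF: "Hw (flip i w) (Suc t) = Hw (flip i w) t + (if t < length w then stepv (flip i w ! t) else 0)"
      using Hw_Suc[of "flip i w" t] by simp
    have HW: "Hw w (Suc t) = Hw w t + (if t < length w then stepv (w ! t) else 0)"
      using Hw_Suc[of w t] by simp
    consider "t < i" | "t = i" | "t = Suc i" | "Suc i < t" by linarith
    then show ?case
    proof cases
      case 1
      then show ?thesis using Suc HF HW flip_nth[OF i, of t] i by auto
    next
      case 2
      then show ?thesis using Suc HF flip_nth[OF i, of t] i HS opp by auto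
    next
      case 3
      then have "Hw (flip i w) t = Hw w i + stepv (w ! Suc i)" using Suc HS opp by auto
      then show ?thesis using 3 HF HW flip_nth[OF i, of t] i HS opp by auto
    next
      case 4
      then show ?thesis using Suc HF HW flip_nth[OF i, of t] i by auto
    qed
  qed
qed

lemma flip_counts:
  assumes s: "set w \<subseteq> {1, 2}" and z: "count_list w 1 = count_list w 2"
    and i: "Suc i < length w" and ne: "w ! i \<noteq> w ! Suc i"
  shows "count_list (flip i w) 1 = count_list (flip i w) 2"
proof -
  have "Hw (flip i w) (length w) = Hw w (length w)" using Hw_flip[OF s i ne] i by simp
  then have "Hw (flip i w) (length (flip i w)) = 0" using Hw_len[OF z] by simp
  then show ?thesis unfolding Hw_def by simp
qed


lemma bin3: "x \<in> {1::nat, 2} \<Longrightarrow> y \<in> {1, 2} \<Longrightarrow> z \<in> {1, 2} \<Longrightarrow> y \<noteq> z \<Longrightarrow> (x = z \<longleftrightarrow> x \<noteq> y)"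
  by auto

lemma allowed_iff:
  assumes s: "set w \<subseteq> {1, 2}" and i: "Suc i < length w" and ne: "w ! i \<noteq> w ! Suc i"
  shows "mismatches (flip i w) \<le> mismatches w \<longleftrightarrow>
    (1 \<le> i \<and> w ! (i - 1) = w ! i) \<or> (i + 2 < length w \<and> w ! Suc i = w ! (i + 2)) \<or> (i = 0 \<and> i + 2 = length w)"
proof -
  define N where "N = length w"
  define f where "f = flip i w"
  define M where "M = {k. Suc k < N \<and> w ! k = w ! Suc k}"
  define M' where "M' = {k. Suc k < N \<and> f ! k = f ! Suc k}"
  define X where "X = (if 1 \<le> i then {i - 1} else {}) \<union> (if i + 2 < N then {Suc i} else {})"
  have lt: "k < N \<Longrightarrow> w ! k \<in> {1, 2}" for k using s unfolding N_def by (auto dest: nth_mem)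
  have fn: "k < N \<Longrightarrow> f ! k = (if k = Suc i then w ! i else if k = i then w ! Suc i else w ! k)" for k
    using flip_nth[OF i] unfolding f_def N_def by auto
  have iN: "Suc i < N" using i unfolding N_def .
  have M'eq: "M' = (M - X) \<union> (X - M)"
  proof (intro set_eqI)
    fix k
    consider "k = i" | "Suc k = i" | "k = Suc i" | "k \<noteq> i \<and> Suc k \<noteq> i \<and> k \<noteq> Suc i" by blast
    then show "k \<in> M' \<longleftrightarrow> k \<in> (M - X) \<union> (X - M)"
    proof cases
      case 1 then show ?thesis using fn[of i] fn[of "Suc i"] iN ne unfolding M'_def M_def X_def by auto
    next
      case 2
      then have "k < N" "w ! k \<in> {1, 2}" using iN lt by auto
      moreover have "w ! i \<in> {1, 2}" "w ! Suc i \<in> {1, 2}" using lt iN by auto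
      ultimately have "w ! k = w ! Suc i \<longleftrightarrow> w ! k \<noteq> w ! i" using bin3 ne by blast
      then show ?thesis using 2 fn[of k] fn[of "Suc k"] iN unfolding M'_def M_def X_def by auto
    next
      case 3
      show ?thesis
      proof (cases "i + 2 < N")
        case True
        have "w ! (i + 2) \<in> {1, 2}" "w ! i \<in> {1, 2}" "w ! Suc i \<in> {1, 2}" using lt True iN by auto
        then have "w ! i = w ! (i + 2) \<longleftrightarrow> w ! Suc i \<noteq> w ! (i + 2)" using ne by auto
        then show ?thesis using 3 True fn[of "Suc i"] fn[of "Suc (Suc i)"] unfolding M'_def M_def X_def by auto
      next
        case False then show ?thesis using 3 unfolding M'_def M_def X_def by auto
      qed
    next
      case 4
      then show ?thesis using fn[of k] fn[of "Suc k"] unfolding M'_def M_def X_def by auto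
    qed
  qed
  have fin: "finite M" "finite X" unfolding M_def X_def by (auto intro: finite_subset[of _ "{..<N}"])
  have c1: "card M' = card (M - X) + card (X - M)"
    unfolding M'eq by (rule card_Un_disjoint) (use fin in auto)
  have c2: "card M = card (M - X) + card (M \<inter> X)"
  proof -
    have "M = (M - X) \<union> (M \<inter> X)" by auto
    then show ?thesis using card_Un_disjoint[of "M - X" "M \<inter> X"] fin by auto
  qed
  have mm: "mismatches (flip i w) = card M'" "mismatches w = card M"
    unfolding mismatches_def M'_def M_def f_def N_def by simp_all
  have L: "(1 \<le> i \<and> i - 1 \<in> M) \<longleftrightarrow> (1 \<le> i \<and> w ! (i - 1) = w ! i)" unfolding M_def using iN by auto
  have R: "(i + 2 < N \<and> Suc i \<in> M) \<longleftrightarrow> (i + 2 < N \<and> w ! Suc i = w ! (i + 2))" unfolding M_def by auto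
  have ne2: "i - 1 \<noteq> Suc i" by auto
  have "card (X - M) \<le> card (M \<inter> X) \<longleftrightarrow> (1 \<le> i \<and> i - 1 \<in> M) \<or> (i + 2 < N \<and> Suc i \<in> M) \<or> (i = 0 \<and> i + 2 = N)"
    unfolding X_def using ne2 iN by (cases "1 \<le> i"; cases "i + 2 < N"; cases "i - 1 \<in> M"; cases "Suc i \<in> M")
      (auto simp: card_insert_if Int_insert_right insert_Diff_if)
  then show ?thesis using c1 c2 mm L R unfolding N_def by auto
qed

lemma mismatch_allowed:
  assumes s: "set w \<subseteq> {1, 2}" and z: "count_list w 1 = count_list w 2" and m: "0 < mismatches w"
  shows "\<exists>i. Suc i < length w \<and> w ! i \<noteq> w ! Suc i \<and>
    ((1 \<le> i \<and> w ! (i - 1) = w ! i) \<or> (i + 2 < length w \<and> w ! Suc i = w ! (i + 2)))"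
proof -
  define N where "N = length w"
  obtain k where k: "Suc k < N" "w ! k = w ! Suc k"
    using m unfolding mismatches_def N_def by (metis (mono_tags, lifting) card.empty empty_Collect_eq less_irrefl)
  define T where "T = {t. k < t \<and> Suc t < N \<and> w ! t \<noteq> w ! Suc t}"
  define S where "S = {t. Suc t \<le> k \<and> w ! t \<noteq> w ! Suc t}"
  show ?thesis
  proof (cases "T = {}")
    case False
    define t where "t = Min T"
    have finT: "finite T" unfolding T_def by (auto intro: finite_subset[of _ "{..<N}"])
    have tT: "t \<in> T" using Min_in[OF finT False] unfolding t_def .
    have tmin: "\<And>s. s \<in> T \<Longrightarrow> t \<le> s" using Min_le[OF finT] unfolding t_def by auto
    have "w ! (t - 1) = w ! t"
    proof (cases "t - 1 = k")
      case True then show ?thesis using k tT unfolding T_def by auto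
    next
      case False
      then have "t - 1 \<notin> T" using tmin[of "t - 1"] tT unfolding T_def by force
      then show ?thesis using False tT unfolding T_def by auto
    qed
    then show ?thesis using tT unfolding T_def N_def by (intro exI[of _ t]) auto
  next
    case Tn: True
    show ?thesis
    proof (cases "S = {}")
      case False
      define t where "t = Max S"
      have finS: "finite S" unfolding S_def by (auto intro: finite_subset[of _ "{..k}"])
      have tS: "t \<in> S" using Max_in[OF finS False] unfolding t_def .
      have tmax: "\<And>s. s \<in> S \<Longrightarrow> s \<le> t" using Max_ge[OF finS] unfolding t_def by auto
      have "w ! Suc t = w ! (t + 2)"
      proof (cases "Suc t = k")
        case True then show ?thesis using k by auto
      next
        case False
        then have "Suc t \<notin> S" using tmax[of "Suc t"] by auto
        then show ?thesis using False tS unfolding S_def by auto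
      qed
      moreover have "t + 2 < N" "Suc t < N" using tS k unfolding S_def by auto
      ultimately show ?thesis using tS unfolding S_def N_def by (intro exI[of _ t]) auto
    next
      case Sn: True
      have all: "w ! t = w ! Suc t" if "Suc t < N" for t
      proof -
        consider "t < k" | "t = k" | "k < t" by linarith
        then show ?thesis
        proof cases
          case 1 then show ?thesis using Sn unfolding S_def by auto
        next
          case 2 then show ?thesis using k by auto
        next
          case 3 then show ?thesis using Tn that unfolding T_def by auto
        qed
      qed
      have const: "t < N \<Longrightarrow> w ! t = w ! 0" for t
        by (induction t) (use all in auto)
      have "\<forall>x\<in>set w. x = w ! 0" using const unfolding N_def by (auto simp: in_set_conv_nth)
      moreover have "w ! 0 \<in> set w" using k unfolding N_def by (auto intro!: nth_mem)
      then have "w ! 0 \<in> {1, 2}" using s by auto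
      ultimately have "3 - w ! 0 \<notin> set w" by auto
      then have "count_list w (3 - w ! 0) = 0" by (rule count_notin)
      moreover have "count_list w (w ! 0) = length w"
        using \<open>\<forall>x\<in>set w. x = w ! 0\<close> by (simp add: count_list_eq_length_filter filter_id_conv)
      ultimately show ?thesis using z k \<open>w ! 0 \<in> {1, 2}\<close> unfolding N_def by auto
    qed
  qed
qed


lemma stepv_eq: "x \<in> {1, 2} \<Longrightarrow> y \<in> {1, 2} \<Longrightarrow> stepv x = stepv y \<longleftrightarrow> x = y"
  by (auto simp: stepv_def)

lemma stepv_opp: "x \<in> {1, 2} \<Longrightarrow> y \<in> {1, 2} \<Longrightarrow> stepv x + stepv y = 0 \<longleftrightarrow> x \<noteq> y"
  by (auto simp: stepv_def)

theorem lemma1: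
  fixes \<alpha> :: real and n :: nat and w :: "nat list"
  assumes "0 < \<alpha>" and "\<alpha> < 1" and "1 \<le> n"
    and "w \<in> configs (2 * n)" and "mismatches w > 0"
  shows "measure_pmf.expectation (cool_step w) (\<lambda>w'. phi \<alpha> w' - phi \<alpha> w)
           \<le> - (\<alpha> * (1 - \<alpha>) / 2) * real n powr (\<alpha> - 2)"
proof -
  note a = assms(1,2)
  have len: "length w = 2 * n" and s: "set w \<subseteq> {1, 2}" and z: "count_list w 1 = count_list w 2"
    using assms(4) unfolding configs_def by auto
  define H where "H = Hw w"
  define N where "N = 2 * n"
  have lenN: "length w = N" using len unfolding N_def .
  interpret P: pset H N n \<alpha>
    unfolding pset_def using Hw_stp[OF s] Hw_len[OF z] a lenN unfolding H_def N_def by auto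
  have sv: "t < N \<Longrightarrow> w ! t \<in> {1, 2}" for t using s lenN by (auto dest!: nth_mem)
  have dH: "t < N \<Longrightarrow> H (Suc t) - H t = stepv (w ! t)" for t using Hw_Suc[of w t] lenN unfolding H_def by simp
  have ext_iff: "P.ext (Suc i) \<longleftrightarrow> Suc i < N \<and> w ! i \<noteq> w ! Suc i" for i
  proof (cases "Suc i < N")
    case True
    have "H (Suc (Suc i)) - H i = stepv (w ! i) + stepv (w ! Suc i)" using dH[of i] dH[of "Suc i"] True by auto
    then show ?thesis using stepv_opp[OF sv sv, of i "Suc i"] True unfolding P.ext_def by auto
  next
    case False then show ?thesis unfolding P.ext_def by auto
  qed
  have LM_iff: "Suc i < N \<Longrightarrow> P.LM (Suc i) \<longleftrightarrow> 1 \<le> i \<and> w ! (i - 1) = w ! i" for i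
  proof -
    assume iN: "Suc i < N"
    show ?thesis
    proof (cases "1 \<le> i")
      case True
      have "H i - H (i - 1) = stepv (w ! (i - 1))" using dH[of "i - 1"] True iN by auto
      moreover have "H (Suc i) - H i = stepv (w ! i)" using dH[of i] iN by auto
      ultimately show ?thesis using stepv_eq[OF sv sv, of "i - 1" i] True iN unfolding P.LM_def by auto
    next
      case False then show ?thesis unfolding P.LM_def by auto
    qed
  qed
  have RM_iff: "Suc i < N \<Longrightarrow> P.RM (Suc i) \<longleftrightarrow> i + 2 < N \<and> w ! Suc i = w ! (i + 2)" for i
  proof -
    assume iN: "Suc i < N"
    show ?thesis
    proof (cases "i + 2 < N")
      case True
      have "H (Suc i + 2) - H (Suc (Suc i)) = stepv (w ! (i + 2))" using dH[of "i + 2"] True by auto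
      moreover have "H (Suc (Suc i)) - H (Suc i) = stepv (w ! Suc i)" using dH[of "Suc i"] True by auto
      ultimately show ?thesis using stepv_eq[OF sv sv, of "i + 2" "Suc i"] True unfolding P.RM_def by auto
    next
      case False then show ?thesis unfolding P.RM_def by auto
    qed
  qed
  obtain i0 where i0: "Suc i0 < length w" "w ! i0 \<noteq> w ! Suc i0"
    "(1 \<le> i0 \<and> w ! (i0 - 1) = w ! i0) \<or> (i0 + 2 < length w \<and> w ! Suc i0 = w ! (i0 + 2))"
    using mismatch_allowed[OF s z assms(5)] by blast
  have "Suc i0 \<in> P.AA" unfolding P.AA_def using i0 ext_iff LM_iff RM_iff lenN by auto
  then have n2: "2 \<le> n" by (rule P.AA_n2)
  define A where "A = allowed_flips w"
  have A_iff: "i \<in> A \<longleftrightarrow> Suc i \<in> P.AA" for i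
  proof (cases "Suc i < N \<and> w ! i \<noteq> w ! Suc i")
    case True
    have "i \<in> A \<longleftrightarrow> (1 \<le> i \<and> w ! (i - 1) = w ! i) \<or> (i + 2 < N \<and> w ! Suc i = w ! (i + 2)) \<or> (i = 0 \<and> i + 2 = N)"
      unfolding A_def allowed_flips_def using allowed_iff[OF s, of i] True lenN by auto
    also have "\<dots> \<longleftrightarrow> (1 \<le> i \<and> w ! (i - 1) = w ! i) \<or> (i + 2 < N \<and> w ! Suc i = w ! (i + 2))"
      using n2 unfolding N_def by auto
    also have "\<dots> \<longleftrightarrow> Suc i \<in> P.AA" unfolding P.AA_def using True ext_iff LM_iff RM_iff by auto
    finally show ?thesis .
  next
    case False
    then show ?thesis unfolding A_def allowed_flips_def P.AA_def using ext_iff lenN by auto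
  qed
  have AAeq: "P.AA = Suc ` A"
  proof (intro set_eqI iffI)
    fix v assume v: "v \<in> P.AA"
    then have "0 < v" unfolding P.AA_def P.ext_def by auto
    then have "v = Suc (v - 1)" by auto
    then show "v \<in> Suc ` A" using v A_iff[of "v - 1"] by (metis image_eqI)
  next
    fix v assume "v \<in> Suc ` A"
    then show "v \<in> P.AA" using A_iff by auto
  qed
  have finA: "finite A" using P.finite_AA AAeq by (simp add: finite_image_iff)
  have neA: "A \<noteq> {}" using \<open>Suc i0 \<in> P.AA\<close> AAeq by auto
  have cs: "cool_step w = map_pmf (\<lambda>i. flip i w) (pmf_of_set A)"
    unfolding cool_step_def A_def using assms(5) by auto
  have phiw: "phi \<alpha> w = phiP \<alpha> H N" using phi_eq[OF s z] lenN unfolding H_def by simp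
  have trm: "phi \<alpha> (flip i w) - phi \<alpha> w = P.Dlt (Suc i)" if iA: "i \<in> A" for i
  proof -
    have e: "P.ext (Suc i)" using A_iff iA unfolding P.AA_def by auto
    then have i: "Suc i < length w" "w ! i \<noteq> w ! Suc i" using ext_iff lenN by auto
    have sf: "set (flip i w) \<subseteq> {1, 2}" using flip_set[OF i(1)] s by auto
    have zf: "count_list (flip i w) 1 = count_list (flip i w) 2" using flip_counts[OF s z i] .
    have e1: "Hw (flip i w) = H(Suc i := 2 * H i - H (Suc i))" using Hw_flip[OF s i] unfolding H_def .
    have X: "phi \<alpha> (flip i w) = phiP \<alpha> (H(Suc i := 2 * H i - H (Suc i))) N"
      using phi_eq[OF sf zf] unfolding e1 flip_len lenN .
    have Y: "phiP \<alpha> (H(Suc i := 2 * H i - H (Suc i))) N - phiP \<alpha> H N = P.Dlt (Suc i)"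
      using P.Dlt_eq[OF e] unfolding diff_Suc_1 .
    show ?thesis using X Y phiw by linarith
  qed
  have "measure_pmf.expectation (cool_step w) (\<lambda>w'. phi \<alpha> w' - phi \<alpha> w)
      = (\<Sum>i\<in>A. phi \<alpha> (flip i w) - phi \<alpha> w) / real (card A)"
    unfolding cs by (simp add: integral_pmf_of_set[OF neA finA])
  also have "(\<Sum>i\<in>A. phi \<alpha> (flip i w) - phi \<alpha> w) = (\<Sum>i\<in>A. P.Dlt (Suc i))"
    using trm by (rule sum.cong[OF refl])
  also have "\<dots> = (\<Sum>v\<in>P.AA. P.Dlt v)" unfolding AAeq by (simp add: sum.reindex)
  also have "card A = card P.AA" unfolding AAeq by (simp add: card_image)
  finally have E: "measure_pmf.expectation (cool_step w) (\<lambda>w'. phi \<alpha> w' - phi \<alpha> w)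
      = (\<Sum>v\<in>P.AA. P.Dlt v) / real (card P.AA)" .
  have cm: "(\<Sum>v\<in>P.AA. P.Dlt v) + real (card P.AA) * cc \<alpha> n \<le> 0"
    using P.comb_main by (simp add: sum.distrib)
  have cpos: "0 < real (card P.AA)" using P.finite_AA \<open>Suc i0 \<in> P.AA\<close> by (auto simp: card_gt_0_iff)
  have "(\<Sum>v\<in>P.AA. P.Dlt v) / real (card P.AA) \<le> - cc \<alpha> n"
    using cm cpos by (simp add: divide_le_eq algebra_simps)
  then show ?thesis unfolding E cc_def by simp
qed


end
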